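(* Let $M$ be a graded $R$-module such that the map $\psi^q$ is surjective. Then the following are equivalent: (1) $qp.Spec_g(M)$ with the quasi-Zariski topology is a spectral space. (2) $qp.Spec_g(M)$ with the quasi-Zariski topology is a $T_0$-space. (3) The natural map $\varphi$ is injective. (4) For all $P,Q\in qp.Spec_g(M)$, if $qp\text{-}V_M^g(P)=qp\text{-}V_M^g(Q)$ then $P=Q$. (5) $|qp.Spec_g^p(M)|\le 1$ for every $p\in Spec_g(R)$. (6) $\varphi$ is a homeomorphism from $qp.Spec_g(M)$ (quasi-Zariski topology) onto $Spec_g(\overline R)$ (Zariski topology).
   Context: $R=\bigoplus_{g\in G}R_g$ is a graded commutative ring with identity graded by a group $G$, $h(R)=\bigcup_g R_g$; $M$ is a graded $R$-module, $h(M)$ its homogeneous elements. $Gr(I)$ is the graded radical of a graded ideal $I$. $Spec_g(R)$: graded prime ideals. $(K:_RM)=\{r: rM\subseteq K\}$. Graded prime submodule: proper graded $P$ with $rm\in P$ ($r\in h(R), m\in h(M)$) implying $m\in P$ or $r\in(P:_RM)$. $Gr_M(K)$: intersection of graded prime submodules containing $K$ ($M$ if none). Graded primeful property of $K$: for each graded prime $p\supseteq(K:_RM)$ there is a graded prime submodule $P\supseteq K$ with $(P:_RM)=p$. Graded quasi-primary submodule: proper graded $Q$ with $rm\in Q$ ($r\in h(R),m\in h(M)$) implying $r\in Gr((Q:_RM))$ or $m\in Gr_M(Q)$. $qp.Spec_g(M)$: graded quasi-primary submodules with the graded primeful property; $qp.Spec_g^p(M)=\{Q\in qp.Spec_g(M):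 Gr((Q:_RM))=p\}$. $qp\text{-}V_M^g(K)=\{Q\in qp.Spec_g(M): Gr((Q:_RM))\supseteq Gr((K:_RM))\}$; the quasi-Zariski topology has closed sets exactly these. $\overline R=R/\mathrm{Ann}(M)$; $Spec_g(\overline R)$ carries the Zariski topology (closed sets: sets of graded primes containing a given graded ideal). The natural map is $\varphi(Q)=(Gr_M(Q):_RM)/\mathrm{Ann}(M)$ (where $(Gr_M(Q):_RM)=Gr((Q:_RM))$ is a graded prime ideal). A graded quasi-primary ideal of $\overline R$ is a proper graded ideal $q$ with $ab\in q$ ($a,b$ homogeneous) implying $a\in Gr(q)$ or $b\in Gr(q)$; $qp.Spec_g(\overline R)$ is the set of them; $\psi^q:qp.Spec_g(M)\to qp.Spec_g(\overline R)$, $\psi^q(Q)=(Q:_RM)/\mathrm{Ann}(M)$. A spectral space (Hochster) is a topological space that is $T_0$, quasi-compact, whose quasi-compact open subsets are closed under finite intersection and form an open base, and in which every irreducible closed subset has a generic point (a point whose closure is the whole subset). *)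

theory Defs
  imports "HOL-Algebra.Algebra" "HOL-Analysis.Analysis"
begin

definition gdecomp :: "'g monoid \<Rightarrow> ('b, 'm) ring_scheme \<Rightarrow> ('g \<Rightarrow> 'b set) \<Rightarrow> 'b \<Rightarrow> ('g \<Rightarrow> 'b) \<Rightarrow> bool" where
  "gdecomp G S A x c \<longleftrightarrow>
     c \<in> extensional (carrier G) \<and> (\<forall>g\<in>carrier G. c g \<in> A g) \<and>
     finite {g \<in> carrier G. c g \<noteq> \<zero>\<^bsub>S\<^esub>} \<and>
     x = (\<Oplus>\<^bsub>S\<^esub>g\<in>{g \<in> carrier G. c g \<noteq> \<zero>\<^bsub>S\<^esub>}. c g)"

definition direct_sum_decomp :: "'g monoid \<Rightarrow> ('b, 'm) ring_scheme \<Rightarrow> ('g \<Rightarrow> 'b set) \<Rightarrow> bool" where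
  "direct_sum_decomp G S A \<longleftrightarrow>
     (\<forall>g\<in>carrier G. subgroup (A g) (add_monoid S)) \<and>
     (\<forall>x\<in>carrier S. \<exists>!c. gdecomp G S A x c)"

definition gcomp :: "'g monoid \<Rightarrow> ('b, 'm) ring_scheme \<Rightarrow> ('g \<Rightarrow> 'b set) \<Rightarrow> 'b \<Rightarrow> 'g \<Rightarrow> 'b" where
  "gcomp G S A x g = (THE c. gdecomp G S A x c) g"

definition homog :: "'g monoid \<Rightarrow> ('g \<Rightarrow> 'b set) \<Rightarrow> 'b set" where
  "homog G A = (\<Union>g\<in>carrier G. A g)"

definition graded_ring :: "'g monoid \<Rightarrow> ('a, 'r) ring_scheme \<Rightarrow> ('g \<Rightarrow> 'a set) \<Rightarrow> bool" where
  "graded_ring G R A \<longleftrightarrow> group G \<and> cring R \<and> direct_sum_decomp G R A \<and>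
     (\<forall>g\<in>carrier G. \<forall>h\<in>carrier G. \<forall>a\<in>A g. \<forall>b\<in>A h. a \<otimes>\<^bsub>R\<^esub> b \<in> A (g \<otimes>\<^bsub>G\<^esub> h))"

definition graded_module :: "'g monoid \<Rightarrow> 'a ring \<Rightarrow> ('g \<Rightarrow> 'a set) \<Rightarrow> ('a, 'b) module \<Rightarrow> ('g \<Rightarrow> 'b set) \<Rightarrow> bool" where
  "graded_module G R A M B \<longleftrightarrow> graded_ring G R A \<and> Module.module R M \<and> direct_sum_decomp G M B \<and>
     (\<forall>g\<in>carrier G. \<forall>h\<in>carrier G. \<forall>a\<in>A g. \<forall>m\<in>B h. a \<odot>\<^bsub>M\<^esub> m \<in> B (g \<otimes>\<^bsub>G\<^esub> h))"

definition graded_ideal :: "'g monoid \<Rightarrow> ('a, 'r) ring_scheme \<Rightarrow> ('g \<Rightarrow> 'a set) \<Rightarrow> 'a set \<Rightarrow> bool" where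
  "graded_ideal G R A I \<longleftrightarrow> ideal I R \<and> (\<forall>x\<in>I. \<forall>g\<in>carrier G. gcomp G R A x g \<in> I)"

definition gr_radical :: "'g monoid \<Rightarrow> ('a, 'r) ring_scheme \<Rightarrow> ('g \<Rightarrow> 'a set) \<Rightarrow> 'a set \<Rightarrow> 'a set" where
  "gr_radical G R A I = {x \<in> carrier R. \<forall>g\<in>carrier G. \<exists>n::nat. (gcomp G R A x g) [^]\<^bsub>R\<^esub> n \<in> I}"

definition graded_prime_ideal :: "'g monoid \<Rightarrow> ('a, 'r) ring_scheme \<Rightarrow> ('g \<Rightarrow> 'a set) \<Rightarrow> 'a set \<Rightarrow> bool" where
  "graded_prime_ideal G R A P \<longleftrightarrow> graded_ideal G R A P \<and> P \<noteq> carrier R \<and>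
     (\<forall>a\<in>homog G A. \<forall>b\<in>homog G A. a \<otimes>\<^bsub>R\<^esub> b \<in> P \<longrightarrow> a \<in> P \<or> b \<in> P)"

definition Spec_g :: "'g monoid \<Rightarrow> ('a, 'r) ring_scheme \<Rightarrow> ('g \<Rightarrow> 'a set) \<Rightarrow> 'a set set" where
  "Spec_g G R A = {P. graded_prime_ideal G R A P}"

definition graded_qp_ideal :: "'g monoid \<Rightarrow> ('a, 'r) ring_scheme \<Rightarrow> ('g \<Rightarrow> 'a set) \<Rightarrow> 'a set \<Rightarrow> bool" where
  "graded_qp_ideal G R A q \<longleftrightarrow> graded_ideal G R A q \<and> q \<noteq> carrier R \<and>
     (\<forall>a\<in>homog G A. \<forall>b\<in>homog G A. a \<otimes>\<^bsub>R\<^esub> b \<in> q \<longrightarrow>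
        a \<in> gr_radical G R A q \<or> b \<in> gr_radical G R A q)"

definition qpSpec_ring :: "'g monoid \<Rightarrow> ('a, 'r) ring_scheme \<Rightarrow> ('g \<Rightarrow> 'a set) \<Rightarrow> 'a set set" where
  "qpSpec_ring G R A = {q. graded_qp_ideal G R A q}"

definition zariski_g :: "'g monoid \<Rightarrow> ('a, 'r) ring_scheme \<Rightarrow> ('g \<Rightarrow> 'a set) \<Rightarrow> 'a set topology" where
  "zariski_g G R A = topology (\<lambda>U. \<exists>I. graded_ideal G R A I \<and>
      U = Spec_g G R A - {p \<in> Spec_g G R A. I \<subseteq> p})"

definition colon :: "'a ring \<Rightarrow> ('a, 'b) module \<Rightarrow> 'b set \<Rightarrow> 'a set" where
  "colon R M K = {r \<in> carrier R. \<forall>m\<in>carrier M. r \<odot>\<^bsub>M\<^esub> m \<in> K}"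

definition ann :: "'a ring \<Rightarrow> ('a, 'b) module \<Rightarrow> 'a set" where
  "ann R M = colon R M {\<zero>\<^bsub>M\<^esub>}"

definition graded_submodule :: "'g monoid \<Rightarrow> 'a ring \<Rightarrow> ('a, 'b) module \<Rightarrow> ('g \<Rightarrow> 'b set) \<Rightarrow> 'b set \<Rightarrow> bool" where
  "graded_submodule G R M B K \<longleftrightarrow> submodule K R M \<and> (\<forall>x\<in>K. \<forall>g\<in>carrier G. gcomp G M B x g \<in> K)"

definition graded_prime_submodule :: "'g monoid \<Rightarrow> 'a ring \<Rightarrow> ('g \<Rightarrow> 'a set) \<Rightarrow> ('a, 'b) module \<Rightarrow> ('g \<Rightarrow> 'b set) \<Rightarrow> 'b set \<Rightarrow> bool" where
  "graded_prime_submodule G R A M B P \<longleftrightarrow> graded_submodule G R M B P \<and> P \<noteq> carrier M \<and>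
     (\<forall>r\<in>homog G A. \<forall>m\<in>homog G B. r \<odot>\<^bsub>M\<^esub> m \<in> P \<longrightarrow> m \<in> P \<or> r \<in> colon R M P)"

text \<open>Gr_M(K): intersection of graded prime submodules containing K (M if there are none).\<close>
definition GrM :: "'g monoid \<Rightarrow> 'a ring \<Rightarrow> ('g \<Rightarrow> 'a set) \<Rightarrow> ('a, 'b) module \<Rightarrow> ('g \<Rightarrow> 'b set) \<Rightarrow> 'b set \<Rightarrow> 'b set" where
  "GrM G R A M B K = carrier M \<inter> \<Inter>{P. graded_prime_submodule G R A M B P \<and> K \<subseteq> P}"

definition graded_primeful :: "'g monoid \<Rightarrow> 'a ring \<Rightarrow> ('g \<Rightarrow> 'a set) \<Rightarrow> ('a, 'b) module \<Rightarrow> ('g \<Rightarrow> 'b set) \<Rightarrow> 'b set \<Rightarrow> bool" where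
  "graded_primeful G R A M B K \<longleftrightarrow>
     (\<forall>p. graded_prime_ideal G R A p \<and> colon R M K \<subseteq> p \<longrightarrow>
        (\<exists>P. graded_prime_submodule G R A M B P \<and> K \<subseteq> P \<and> colon R M P = p))"

definition graded_qp_submodule :: "'g monoid \<Rightarrow> 'a ring \<Rightarrow> ('g \<Rightarrow> 'a set) \<Rightarrow> ('a, 'b) module \<Rightarrow> ('g \<Rightarrow> 'b set) \<Rightarrow> 'b set \<Rightarrow> bool" where
  "graded_qp_submodule G R A M B Q \<longleftrightarrow> graded_submodule G R M B Q \<and> Q \<noteq> carrier M \<and>
     (\<forall>r\<in>homog G A. \<forall>m\<in>homog G B. r \<odot>\<^bsub>M\<^esub> m \<in> Q \<longrightarrow>
        r \<in> gr_radical G R A (colon R M Q) \<or> m \<in> GrM G R A M B Q)"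

definition qpSpec :: "'g monoid \<Rightarrow> 'a ring \<Rightarrow> ('g \<Rightarrow> 'a set) \<Rightarrow> ('a, 'b) module \<Rightarrow> ('g \<Rightarrow> 'b set) \<Rightarrow> 'b set set" where
  "qpSpec G R A M B = {Q. graded_qp_submodule G R A M B Q \<and> graded_primeful G R A M B Q}"

definition qpSpec_at :: "'g monoid \<Rightarrow> 'a ring \<Rightarrow> ('g \<Rightarrow> 'a set) \<Rightarrow> ('a, 'b) module \<Rightarrow> ('g \<Rightarrow> 'b set) \<Rightarrow> 'a set \<Rightarrow> 'b set set" where
  "qpSpec_at G R A M B p = {Q \<in> qpSpec G R A M B. gr_radical G R A (colon R M Q) = p}"

definition qpV :: "'g monoid \<Rightarrow> 'a ring \<Rightarrow> ('g \<Rightarrow> 'a set) \<Rightarrow> ('a, 'b) module \<Rightarrow> ('g \<Rightarrow> 'b set) \<Rightarrow> 'b set \<Rightarrow> 'b set set" where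
  "qpV G R A M B K = {Q \<in> qpSpec G R A M B.
      gr_radical G R A (colon R M K) \<subseteq> gr_radical G R A (colon R M Q)}"

definition quasi_zariski :: "'g monoid \<Rightarrow> 'a ring \<Rightarrow> ('g \<Rightarrow> 'a set) \<Rightarrow> ('a, 'b) module \<Rightarrow> ('g \<Rightarrow> 'b set) \<Rightarrow> 'b set topology" where
  "quasi_zariski G R A M B = topology (\<lambda>U. \<exists>K. graded_submodule G R M B K \<and>
      U = qpSpec G R A M B - qpV G R A M B K)"

definition Rbar :: "'a ring \<Rightarrow> ('a, 'b) module \<Rightarrow> 'a set ring" where
  "Rbar R M = R Quot (ann R M)"

definition Abar :: "'a ring \<Rightarrow> ('a, 'b) module \<Rightarrow> ('g \<Rightarrow> 'a set) \<Rightarrow> 'g \<Rightarrow> 'a set set" where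
  "Abar R M A g = (\<lambda>x. a_r_coset R (ann R M) x) ` A g"

definition phi_map :: "'g monoid \<Rightarrow> 'a ring \<Rightarrow> ('g \<Rightarrow> 'a set) \<Rightarrow> ('a, 'b) module \<Rightarrow> ('g \<Rightarrow> 'b set) \<Rightarrow> 'b set \<Rightarrow> 'a set set" where
  "phi_map G R A M B Q = (\<lambda>x. a_r_coset R (ann R M) x) ` colon R M (GrM G R A M B Q)"

definition psi_q :: "'a ring \<Rightarrow> ('a, 'b) module \<Rightarrow> 'b set \<Rightarrow> 'a set set" where
  "psi_q R M Q = (\<lambda>x. a_r_coset R (ann R M) x) ` colon R M Q"

definition irreducible_in :: "'a topology \<Rightarrow> 'a set \<Rightarrow> bool" where
  "irreducible_in T S \<longleftrightarrow> S \<subseteq> topspace T \<and> S \<noteq> {} \<and>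
     (\<forall>C1 C2. closedin T C1 \<and> closedin T C2 \<and> S \<subseteq> C1 \<union> C2 \<longrightarrow> S \<subseteq> C1 \<or> S \<subseteq> C2)"

definition spectral_space :: "'a topology \<Rightarrow> bool" where
  "spectral_space T \<longleftrightarrow>
     t0_space T \<and> compact_space T \<and>
     (\<forall>U V. openin T U \<and> compactin T U \<and> openin T V \<and> compactin T V \<longrightarrow> compactin T (U \<inter> V)) \<and>
     (\<forall>W x. openin T W \<and> x \<in> W \<longrightarrow> (\<exists>U. openin T U \<and> compactin T U \<and> x \<in> U \<and> U \<subseteq> W)) \<and>
     (\<forall>S. closedin T S \<and> irreducible_in T S \<longrightarrow> (\<exists>x\<in>S. T closure_of {x} = S))"

end

theory Submission
  imports Defs
begin


locale dsd =
  fixes G :: "'g monoid" and S :: "('b,'m) ring_scheme" (structure) and A :: "'g \<Rightarrow> 'b set"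
  assumes ag: "abelian_group S" and ds: "direct_sum_decomp G S A"
begin

sublocale abelian_group S by (rule ag)

lemma A_subgroup: "g \<in> carrier G \<Longrightarrow> subgroup (A g) (add_monoid S)"
  using ds unfolding direct_sum_decomp_def by auto

lemma A_sub: "g \<in> carrier G \<Longrightarrow> A g \<subseteq> carrier S"
  using A_subgroup subgroup.subset by fastforce

lemma A_zero: "g \<in> carrier G \<Longrightarrow> \<zero> \<in> A g"
  using A_subgroup subgroup.one_closed by fastforce

lemma A_add: "g \<in> carrier G \<Longrightarrow> a \<in> A g \<Longrightarrow> b \<in> A g \<Longrightarrow> a \<oplus> b \<in> A g"
  using A_subgroup subgroup.m_closed by fastforce

lemma A_neg: "g \<in> carrier G \<Longrightarrow> a \<in> A g \<Longrightarrow> \<ominus> a \<in> A g"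
  using A_subgroup[of g] subgroup.m_inv_closed[of "A g" "add_monoid S" a]
  by (simp add: a_inv_def)

lemma ex1_decomp: "x \<in> carrier S \<Longrightarrow> \<exists>!c. gdecomp G S A x c"
  using ds unfolding direct_sum_decomp_def by auto

lemma gcomp_eq: "gcomp G S A x = (THE c. gdecomp G S A x c)"
  by (rule ext) (simp add: gcomp_def)

lemma decomp_gcomp: "x \<in> carrier S \<Longrightarrow> gdecomp G S A x (gcomp G S A x)"
  unfolding gcomp_eq using ex1_decomp theI' by metis

lemma decomp_carrier: "gdecomp G S A x c \<Longrightarrow> x \<in> carrier S"
proof -
  assume d: "gdecomp G S A x c"
  then have "\<forall>g\<in>carrier G. c g \<in> A g" by (simp add: gdecomp_def)
  then have "c \<in> {g \<in> carrier G. c g \<noteq> \<zero>} \<rightarrow> carrier S" using A_sub by blast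
  then show ?thesis using d unfolding gdecomp_def by (metis finsum_closed)
qed

lemma decomp_unique: "gdecomp G S A x c \<Longrightarrow> gcomp G S A x = c"
  unfolding gcomp_eq using ex1_decomp decomp_carrier the1_equality by metis

lemma gcomp_in: "x \<in> carrier S \<Longrightarrow> g \<in> carrier G \<Longrightarrow> gcomp G S A x g \<in> A g"
  using decomp_gcomp unfolding gdecomp_def by blast

lemma gcomp_carrier: "x \<in> carrier S \<Longrightarrow> g \<in> carrier G \<Longrightarrow> gcomp G S A x g \<in> carrier S"
  using gcomp_in A_sub by blast

lemma supp_finite: "x \<in> carrier S \<Longrightarrow> finite {g \<in> carrier G. gcomp G S A x g \<noteq> \<zero>}"
  using decomp_gcomp unfolding gdecomp_def by blast

lemma sum_comp: "x \<in> carrier S \<Longrightarrow> x = (\<Oplus>g\<in>{g \<in> carrier G. gcomp G S A x g \<noteq> \<zero>}. gcomp G S A x g)"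
  using decomp_gcomp unfolding gdecomp_def by blast

lemma gdecomp_intro:
  assumes "c \<in> extensional (carrier G)" "\<And>g. g \<in> carrier G \<Longrightarrow> c g \<in> A g"
    "finite F" "F \<subseteq> carrier G" "\<And>g. g \<in> carrier G \<Longrightarrow> g \<notin> F \<Longrightarrow> c g = \<zero>"
    "x = (\<Oplus>g\<in>F. c g)"
  shows "gdecomp G S A x c"
proof -
  let ?S = "{g \<in> carrier G. c g \<noteq> \<zero>}"
  have sub: "?S \<subseteq> F" using assms(5) by blast
  have fin: "finite ?S" using sub assms(3) finite_subset by blast
  have "(\<Oplus>g\<in>F. c g) = (\<Oplus>g\<in>?S. c g)"
    apply (rule add.finprod_mono_neutral_cong_right)
    using assms A_sub sub by (auto simp: Pi_def) blast
  then show ?thesis unfolding gdecomp_def using assms fin by auto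
qed

lemma sum_comp_F: "x \<in> carrier S \<Longrightarrow> finite F \<Longrightarrow> F \<subseteq> carrier G \<Longrightarrow>
   {g \<in> carrier G. gcomp G S A x g \<noteq> \<zero>} \<subseteq> F \<Longrightarrow> x = (\<Oplus>g\<in>F. gcomp G S A x g)"
  apply (subst sum_comp, assumption)
  apply (rule add.finprod_mono_neutral_cong_left)
  using gcomp_carrier by auto

lemma gcomp_homog:
  assumes "h \<in> carrier G" "a \<in> A h" "g \<in> carrier G"
  shows "gcomp G S A a g = (if g = h then a else \<zero>)"
proof -
  let ?c = "restrict (\<lambda>g. if g = h then a else \<zero>) (carrier G)"
  have "gdecomp G S A a ?c"
    apply (rule gdecomp_intro[where F="{h}"])
    using assms A_zero A_sub apply auto[5]
    apply (subst finsum_insert) using assms A_sub by (auto intro!: r_zero[symmetric])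
  then show ?thesis using decomp_unique assms by auto
qed

lemma gcomp_zero: "g \<in> carrier G \<Longrightarrow> gcomp G S A \<zero> g = \<zero>"
proof -
  assume g: "g \<in> carrier G"
  let ?c = "restrict (\<lambda>g. \<zero>) (carrier G)"
  have "gdecomp G S A \<zero> ?c"
    apply (rule gdecomp_intro[where F="{}"])
    using A_zero by auto
  then show ?thesis using decomp_unique g by auto
qed

lemma finsum_in_set:
  assumes "finite F" "\<zero> \<in> Y" "\<And>a b. a \<in> Y \<Longrightarrow> b \<in> Y \<Longrightarrow> a \<oplus> b \<in> Y" "Y \<subseteq> carrier S"
    "\<And>i. i \<in> F \<Longrightarrow> f i \<in> Y"
  shows "(\<Oplus>i\<in>F. f i) \<in> Y"
  using assms(1,5)
proof (induct F rule: finite_induct)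
  case empty then show ?case using assms by simp
next
  case (insert i F)
  have "f \<in> F \<rightarrow> carrier S" "f i \<in> carrier S" using insert assms(4) by auto
  then show ?case using insert assms by (simp add: finsum_insert)
qed

lemma in_set_by_comps:
  assumes "x \<in> carrier S" "\<zero> \<in> Y" "\<And>a b. a \<in> Y \<Longrightarrow> b \<in> Y \<Longrightarrow> a \<oplus> b \<in> Y" "Y \<subseteq> carrier S"
    "\<And>g. g \<in> carrier G \<Longrightarrow> gcomp G S A x g \<in> Y"
  shows "x \<in> Y"
  apply (subst sum_comp[OF assms(1)])
  apply (rule finsum_in_set)
  using assms supp_finite by auto

end


locale grring =
  fixes G :: "'g monoid" and R :: "('a,'r) ring_scheme" (structure) and A :: "'g \<Rightarrow> 'a set"
  assumes gr: "graded_ring G R A"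
begin

sublocale cring R using gr unfolding graded_ring_def by auto
sublocale G: group G using gr unfolding graded_ring_def by auto
sublocale D: dsd G R A
  using gr unfolding graded_ring_def by (auto intro!: dsd.intro abelian_group_axioms)

lemma mult_A: "g \<in> carrier G \<Longrightarrow> h \<in> carrier G \<Longrightarrow> a \<in> A g \<Longrightarrow> b \<in> A h \<Longrightarrow> a \<otimes> b \<in> A (g \<otimes>\<^bsub>G\<^esub> h)"
  using gr unfolding graded_ring_def by blast

lemma homog_carrier: "homog G A \<subseteq> carrier R"
  unfolding homog_def using D.A_sub by blast

lemma homogI: "g \<in> carrier G \<Longrightarrow> a \<in> A g \<Longrightarrow> a \<in> homog G A"
  unfolding homog_def by blast

lemma homogE: "a \<in> homog G A \<Longrightarrow> (\<And>g. g \<in> carrier G \<Longrightarrow> a \<in> A g \<Longrightarrow> P) \<Longrightarrow> P"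
  unfolding homog_def by blast

lemma homog_mult: "a \<in> homog G A \<Longrightarrow> b \<in> homog G A \<Longrightarrow> a \<otimes> b \<in> homog G A"
  by (metis homogE homogI mult_A G.m_closed)

lemma homog_pow: "a \<in> homog G A \<Longrightarrow> a [^] Suc n \<in> homog G A"
proof (induct n)
  case 0 then show ?case using homog_carrier by auto
next
  case (Suc n)
  then have "a [^] Suc (Suc n) = a [^] Suc n \<otimes> a" by simp
  then show ?case using Suc homog_mult by metis
qed

lemma gcomp_homog_self: "h \<in> carrier G \<Longrightarrow> a \<in> A h \<Longrightarrow> gcomp G R A a h = a"
  using D.gcomp_homog by auto

lemma gcomp_mult_homog:
  assumes x: "x \<in> carrier R" and h: "h \<in> carrier G" and y: "y \<in> A h" and g: "g \<in> carrier G"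
  shows "gcomp G R A (x \<otimes> y) (g \<otimes>\<^bsub>G\<^esub> h) = gcomp G R A x g \<otimes> y"
proof -
  let ?sx = "{g \<in> carrier G. gcomp G R A x g \<noteq> \<zero>}"
  let ?c = "restrict (\<lambda>k. gcomp G R A x (k \<otimes>\<^bsub>G\<^esub> inv\<^bsub>G\<^esub> h) \<otimes> y) (carrier G)"
  let ?F = "(\<lambda>k. k \<otimes>\<^bsub>G\<^esub> h) ` ?sx"
  have yc: "y \<in> carrier R" using D.A_sub h y by blast
  have kh: "\<And>k. k \<in> carrier G \<Longrightarrow> (k \<otimes>\<^bsub>G\<^esub> inv\<^bsub>G\<^esub> h) \<otimes>\<^bsub>G\<^esub> h = k"
    using h by (simp add: G.m_assoc)
  have hk: "\<And>k. k \<in> carrier G \<Longrightarrow> (k \<otimes>\<^bsub>G\<^esub> h) \<otimes>\<^bsub>G\<^esub> inv\<^bsub>G\<^esub> h = k"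
    using h by (simp add: G.m_assoc)
  have inj: "inj_on (\<lambda>k. k \<otimes>\<^bsub>G\<^esub> h) ?sx"
    by (rule inj_onI) (use h in auto)
  have fin: "finite ?sx" using D.supp_finite x by blast
  have "gdecomp G R A (x \<otimes> y) ?c"
  proof (rule D.gdecomp_intro[where F="?F"])
    show "?c \<in> extensional (carrier G)" by simp
    show "finite ?F" using fin by blast
    show "?F \<subseteq> carrier G" using h by auto
  next
    fix k assume k: "k \<in> carrier G"
    have k1: "k \<otimes>\<^bsub>G\<^esub> inv\<^bsub>G\<^esub> h \<in> carrier G" using k h by simp
    have "gcomp G R A x (k \<otimes>\<^bsub>G\<^esub> inv\<^bsub>G\<^esub> h) \<otimes> y \<in> A ((k \<otimes>\<^bsub>G\<^esub> inv\<^bsub>G\<^esub> h) \<otimes>\<^bsub>G\<^esub> h)"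
      by (rule mult_A[OF k1 h D.gcomp_in[OF x k1] y])
    then show "?c k \<in> A k" using k kh by simp
  next
    fix k assume k: "k \<in> carrier G" and nk: "k \<notin> ?F"
    have k1: "k \<otimes>\<^bsub>G\<^esub> inv\<^bsub>G\<^esub> h \<in> carrier G" using k h by simp
    have "k \<otimes>\<^bsub>G\<^esub> inv\<^bsub>G\<^esub> h \<notin> ?sx"
    proof
      assume "k \<otimes>\<^bsub>G\<^esub> inv\<^bsub>G\<^esub> h \<in> ?sx"
      then have "(k \<otimes>\<^bsub>G\<^esub> inv\<^bsub>G\<^esub> h) \<otimes>\<^bsub>G\<^esub> h \<in> ?F" by blast
      then show False using nk kh k by simp
    qed
    then have "gcomp G R A x (k \<otimes>\<^bsub>G\<^esub> inv\<^bsub>G\<^esub> h) = \<zero>" using k1 by blast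
    then show "?c k = \<zero>" using k yc by simp
  next
    have "x \<otimes> y = (\<Oplus>g\<in>?sx. gcomp G R A x g) \<otimes> y"
      using D.sum_comp x by simp
    also have "\<dots> = (\<Oplus>g\<in>?sx. gcomp G R A x g \<otimes> y)"
      by (rule finsum_ldistr) (use fin yc D.gcomp_carrier x in auto)
    also have "\<dots> = (\<Oplus>g\<in>?sx. ?c (g \<otimes>\<^bsub>G\<^esub> h))"
      by (rule finsum_cong') (use h hk D.gcomp_carrier x yc in auto)
    also have "\<dots> = (\<Oplus>k\<in>?F. ?c k)"
      by (rule finsum_reindex[symmetric]) (use inj D.gcomp_carrier x yc h in auto)
    finally show "x \<otimes> y = (\<Oplus>k\<in>?F. ?c k)" .
  qed
  then have "gcomp G R A (x \<otimes> y) = ?c" by (rule D.decomp_unique)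
  then show ?thesis using g h hk by simp
qed


lemma idealI':
  assumes "I \<subseteq> carrier R" "\<zero> \<in> I" "\<And>a b. a \<in> I \<Longrightarrow> b \<in> I \<Longrightarrow> a \<oplus> b \<in> I"
    "\<And>a. a \<in> I \<Longrightarrow> \<ominus> a \<in> I" "\<And>a x. a \<in> I \<Longrightarrow> x \<in> carrier R \<Longrightarrow> x \<otimes> a \<in> I"
  shows "ideal I R"
proof (rule idealI)
  show "ring R" by (rule ring_axioms)
  show "subgroup I (add_monoid R)"
    apply (rule add.subgroupI)
    using assms(1) apply simp
    using assms(2) apply auto[1]
    using assms(4) apply (simp add: a_inv_def[symmetric])
    using assms(3) by simp
  show "\<And>a x. a \<in> I \<Longrightarrow> x \<in> carrier R \<Longrightarrow> x \<otimes> a \<in> I" by (rule assms(5))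
  show "\<And>a x. a \<in> I \<Longrightarrow> x \<in> carrier R \<Longrightarrow> a \<otimes> x \<in> I"
    using assms(1,5) m_comm by (metis subsetD)
qed

lemma gideal_ideal: "graded_ideal G R A I \<Longrightarrow> ideal I R"
  unfolding graded_ideal_def by blast

lemma gideal_comp: "graded_ideal G R A I \<Longrightarrow> x \<in> I \<Longrightarrow> g \<in> carrier G \<Longrightarrow> gcomp G R A x g \<in> I"
  unfolding graded_ideal_def by blast

lemma ideal_sub: "ideal I R \<Longrightarrow> I \<subseteq> carrier R"
  by (auto dest: ideal.Icarr)

lemma ideal_by_comps:
  assumes "ideal I R" "x \<in> carrier R" "\<And>g. g \<in> carrier G \<Longrightarrow> gcomp G R A x g \<in> I"
  shows "x \<in> I"
proof -
  interpret I: ideal I R by (rule assms(1))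
  show ?thesis
    by (rule D.in_set_by_comps[OF assms(2) I.zero_closed I.a_closed I.a_subset assms(3)])
qed

lemma gideal_carrier: "graded_ideal G R A (carrier R)"
  by (simp add: graded_ideal_def oneideal D.gcomp_carrier)

lemma gideal_Inter:
  assumes "C \<noteq> {}" "\<And>I. I \<in> C \<Longrightarrow> graded_ideal G R A I"
  shows "graded_ideal G R A (\<Inter>C)"
proof -
  have "ideal (\<Inter>C) R" by (rule i_Intersect) (use assms gideal_ideal in auto)
  moreover have "gcomp G R A x g \<in> \<Inter>C" if "x \<in> \<Inter>C" "g \<in> carrier G" for x g
    using that assms(2) gideal_comp by auto
  ultimately show ?thesis unfolding graded_ideal_def by auto
qed

lemma gideal_Union_directed:
  assumes ne: "C \<noteq> {}" and gi: "\<And>I. I \<in> C \<Longrightarrow> graded_ideal G R A I"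
    and ch: "\<And>I J. I \<in> C \<Longrightarrow> J \<in> C \<Longrightarrow> \<exists>K\<in>C. I \<subseteq> K \<and> J \<subseteq> K"
  shows "graded_ideal G R A (\<Union>C)"
proof -
  have id: "\<And>I. I \<in> C \<Longrightarrow> ideal I R" using gi gideal_ideal by simp
  have "ideal (\<Union>C) R"
  proof (rule idealI')
    show "\<Union>C \<subseteq> carrier R" using id ideal_sub by auto
    obtain I where "I \<in> C" using ne by blast
    then show "\<zero> \<in> \<Union>C" using id[of I] by (auto dest: ideal.axioms(1) additive_subgroup.zero_closed)
  next
    fix a b assume "a \<in> \<Union>C" "b \<in> \<Union>C"
    then obtain I J where IJ: "I \<in> C" "J \<in> C" "a \<in> I" "b \<in> J" by blast
    obtain K where K: "K \<in> C" "I \<subseteq> K" "J \<subseteq> K" using ch[OF IJ(1,2)] by blast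
    have "a \<in> K" "b \<in> K" using K IJ by auto
    then have "a \<oplus> b \<in> K" using id[OF K(1)] by (auto dest: ideal.axioms(1) intro: additive_subgroup.a_closed)
    then show "a \<oplus> b \<in> \<Union>C" using K by auto
  next
    fix a assume "a \<in> \<Union>C"
    then obtain I where "I \<in> C" "a \<in> I" by blast
    then have "\<ominus> a \<in> I" using id[of I] by (auto dest: ideal.axioms(1) intro: additive_subgroup.a_inv_closed)
    then show "\<ominus> a \<in> \<Union>C" using \<open>I \<in> C\<close> by auto
  next
    fix a x assume "a \<in> \<Union>C" "x \<in> carrier R"
    then obtain I where "I \<in> C" "a \<in> I" by blast
    then have "x \<otimes> a \<in> I" using id[of I] \<open>x \<in> carrier R\<close> by (auto intro: ideal.I_l_closed)
    then show "x \<otimes> a \<in> \<Union>C" using \<open>I \<in> C\<close> by auto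
  qed
  moreover have "gcomp G R A x g \<in> \<Union>C" if xC: "x \<in> \<Union>C" and g: "g \<in> carrier G" for x g
  proof -
    obtain I where I: "I \<in> C" "x \<in> I" using xC by blast
    have "gcomp G R A x g \<in> I" by (rule gideal_comp[OF gi[OF I(1)] I(2) g])
    then show ?thesis using I(1) by blast
  qed
  ultimately show ?thesis unfolding graded_ideal_def by auto
qed

lemma gideal_Union_chain:
  assumes ne: "C \<noteq> {}" and gi: "\<And>I. I \<in> C \<Longrightarrow> graded_ideal G R A I"
    and ch: "\<And>I J. I \<in> C \<Longrightarrow> J \<in> C \<Longrightarrow> I \<subseteq> J \<or> J \<subseteq> I"
  shows "graded_ideal G R A (\<Union>C)"
proof (rule gideal_Union_directed[OF ne gi])
  fix I J assume "I \<in> C" "J \<in> C"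
  then show "\<exists>K\<in>C. I \<subseteq> K \<and> J \<subseteq> K" using ch[of I J] by auto
qed auto

lemma gideal_colon_el:
  assumes I: "graded_ideal G R A I" and x: "x \<in> homog G A"
  shows "graded_ideal G R A {r \<in> carrier R. r \<otimes> x \<in> I}"
proof -
  interpret I: ideal I R using I gideal_ideal by blast
  have xc: "x \<in> carrier R" using x homog_carrier by auto
  have "ideal {r \<in> carrier R. r \<otimes> x \<in> I} R"
  proof (rule idealI')
    show "{r \<in> carrier R. r \<otimes> x \<in> I} \<subseteq> carrier R" by auto
    show "\<zero> \<in> {r \<in> carrier R. r \<otimes> x \<in> I}" using xc I.zero_closed by simp
  next
    fix a b assume a: "a \<in> {r \<in> carrier R. r \<otimes> x \<in> I}" and b: "b \<in> {r \<in> carrier R. r \<otimes> x \<in> I}"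
    have "(a \<oplus> b) \<otimes> x = a \<otimes> x \<oplus> b \<otimes> x" using a b xc l_distr by auto
    then show "a \<oplus> b \<in> {r \<in> carrier R. r \<otimes> x \<in> I}" using a b I.a_closed by auto
  next
    fix a assume a: "a \<in> {r \<in> carrier R. r \<otimes> x \<in> I}"
    have "\<ominus> a \<otimes> x = \<ominus> (a \<otimes> x)" using a xc l_minus by auto
    then show "\<ominus> a \<in> {r \<in> carrier R. r \<otimes> x \<in> I}" using a I.a_inv_closed by auto
  next
    fix a y assume a: "a \<in> {r \<in> carrier R. r \<otimes> x \<in> I}" and y: "y \<in> carrier R"
    have "y \<otimes> a \<otimes> x = y \<otimes> (a \<otimes> x)" using a xc y m_assoc by auto
    then show "y \<otimes> a \<in> {r \<in> carrier R. r \<otimes> x \<in> I}" using a y I.I_l_closed by auto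
  qed
  moreover have "gcomp G R A r g \<in> {r \<in> carrier R. r \<otimes> x \<in> I}"
    if r: "r \<in> {r \<in> carrier R. r \<otimes> x \<in> I}" and g: "g \<in> carrier G" for r g
  proof -
    obtain h where h: "h \<in> carrier G" "x \<in> A h" using x homogE by blast
    have "gcomp G R A (r \<otimes> x) (g \<otimes>\<^bsub>G\<^esub> h) \<in> I"
      using r g h I gideal_comp by auto
    then have "gcomp G R A r g \<otimes> x \<in> I" using gcomp_mult_homog[of r h x g] r h g by auto
    then show ?thesis using D.gcomp_carrier r g by auto
  qed
  ultimately show ?thesis unfolding graded_ideal_def by auto
qed

lemma spec_prime: "p \<in> Spec_g G R A \<Longrightarrow> a \<in> homog G A \<Longrightarrow> b \<in> homog G A \<Longrightarrow> a \<otimes> b \<in> p \<Longrightarrow> a \<in> p \<or> b \<in> p"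
  unfolding Spec_g_def graded_prime_ideal_def by blast

lemma spec_gideal: "p \<in> Spec_g G R A \<Longrightarrow> graded_ideal G R A p"
  unfolding Spec_g_def graded_prime_ideal_def by blast

lemma spec_proper: "p \<in> Spec_g G R A \<Longrightarrow> p \<noteq> carrier R"
  unfolding Spec_g_def graded_prime_ideal_def by blast

lemma spec_one: "p \<in> Spec_g G R A \<Longrightarrow> \<one> \<notin> p"
  using spec_proper spec_gideal gideal_ideal ideal.one_imp_carrier by metis

lemma prime_pow:
  assumes p: "p \<in> Spec_g G R A" and a: "a \<in> homog G A" and ap: "a [^] (n::nat) \<in> p"
  shows "a \<in> p"
  using ap
proof (induct n)
  case 0 then show ?case using spec_one p by simp
next
  case (Suc n)
  show ?case
  proof (cases n)
    case 0 then show ?thesis using Suc a homog_carrier by auto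
  next
    case (Suc m)
    have "a [^] Suc n = a [^] n \<otimes> a" by simp
    then have "a [^] n \<in> p \<or> a \<in> p" using spec_prime[OF p homog_pow[OF a, of m] a] Suc \<open>a [^] Suc n \<in> p\<close> by simp
    then show ?thesis using \<open>a [^] n \<in> p \<Longrightarrow> a \<in> p\<close> by blast
  qed
qed

lemma exists_prime:
  assumes I: "graded_ideal G R A I" and Sc: "S \<subseteq> carrier R" and Sne: "S \<noteq> {}"
    and Sm: "\<And>s t. s \<in> S \<Longrightarrow> t \<in> S \<Longrightarrow> s \<otimes> t \<in> S"
    and Sh: "\<And>s. s \<in> S \<Longrightarrow> s = \<one> \<or> s \<in> homog G A"
    and dis: "I \<inter> S = {}"
  shows "\<exists>p \<in> Spec_g G R A. I \<subseteq> p \<and> p \<inter> S = {}"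
proof -
  let ?F = "{P. graded_ideal G R A P \<and> I \<subseteq> P \<and> P \<inter> S = {}}"
  have "\<exists>P\<in>?F. \<forall>Z\<in>?F. P \<subseteq> Z \<longrightarrow> Z = P"
  proof (rule subset_Zorn_nonempty)
    show "?F \<noteq> {}" using I dis by auto
  next
    fix C assume ne: "C \<noteq> {}" and ch: "subset.chain ?F C"
    then have CF: "C \<subseteq> ?F" and tot: "\<forall>Z\<in>C. \<forall>Y\<in>C. Z \<subseteq> Y \<or> Y \<subseteq> Z"
      by (auto simp: subset_chain_def)
    have "graded_ideal G R A (\<Union>C)"
      by (rule gideal_Union_chain) (use ne CF tot in auto)
    moreover have "I \<subseteq> \<Union>C" using ne CF by auto
    moreover have "\<Union>C \<inter> S = {}" using CF by auto
    ultimately show "\<Union>C \<in> ?F" by auto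
  qed
  then obtain P where PF: "P \<in> ?F" and max: "\<And>Z. Z \<in> ?F \<Longrightarrow> P \<subseteq> Z \<Longrightarrow> Z = P" by auto
  have Pg: "graded_ideal G R A P" and IP: "I \<subseteq> P" and PS: "P \<inter> S = {}" using PF by auto
  interpret P: ideal P R using Pg gideal_ideal by auto
  have Psub: "P \<subseteq> {r \<in> carrier R. r \<otimes> x \<in> P}" if x: "x \<in> homog G A" for x
  proof
    fix r assume r: "r \<in> P"
    have "x \<in> carrier R" using x homog_carrier by auto
    then show "r \<in> {r \<in> carrier R. r \<otimes> x \<in> P}" using r P.I_r_closed P.Icarr by auto
  qed
  have meets: "{r \<in> carrier R. r \<otimes> x \<in> P} \<inter> S \<noteq> {}"
    if x: "x \<in> homog G A" and y: "y \<in> {r \<in> carrier R. r \<otimes> x \<in> P}" and yP: "y \<notin> P" for x y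
  proof
    assume d: "{r \<in> carrier R. r \<otimes> x \<in> P} \<inter> S = {}"
    have "I \<subseteq> {r \<in> carrier R. r \<otimes> x \<in> P}" using IP Psub[OF x] by auto
    then have "{r \<in> carrier R. r \<otimes> x \<in> P} \<in> ?F" using gideal_colon_el[OF Pg x] d by auto
    then have "{r \<in> carrier R. r \<otimes> x \<in> P} = P" using max Psub[OF x] by auto
    then show False using y yP by auto
  qed
  have prime: "a \<in> P \<or> b \<in> P" if a: "a \<in> homog G A" and b: "b \<in> homog G A" and ab: "a \<otimes> b \<in> P" for a b
  proof (rule ccontr)
    assume nab: "\<not> (a \<in> P \<or> b \<in> P)"
    have ac: "a \<in> carrier R" and bc: "b \<in> carrier R" using a b homog_carrier by auto
    have "b \<otimes> a \<in> P" using ab ac bc m_comm by simp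
    then have "b \<in> {r \<in> carrier R. r \<otimes> a \<in> P}" using bc by simp
    then have "{r \<in> carrier R. r \<otimes> a \<in> P} \<inter> S \<noteq> {}" using meets[OF a] nab by auto
    then obtain s where s: "s \<in> S" "s \<otimes> a \<in> P" by auto
    show False
    proof (cases "s = \<one>")
      case True then show False using s nab ac by simp
    next
      case False
      then have sh: "s \<in> homog G A" using Sh s by auto
      have sc: "s \<in> carrier R" using s Sc by auto
      have "a \<otimes> s \<in> P" using s ac sc m_comm by simp
      then have "a \<in> {r \<in> carrier R. r \<otimes> s \<in> P}" using ac by simp
      then have "{r \<in> carrier R. r \<otimes> s \<in> P} \<inter> S \<noteq> {}" using meets[OF sh] nab by auto
      then obtain t where t: "t \<in> S" "t \<otimes> s \<in> P" by auto
      have "t \<otimes> s \<in> S" using Sm[OF t(1) s(1)] .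
      then show False using t(2) PS by auto
    qed
  qed
  obtain s0 where "s0 \<in> S" using Sne by auto
  then have "P \<noteq> carrier R" using Sc PS by auto
  then have "P \<in> Spec_g G R A"
    unfolding Spec_g_def graded_prime_ideal_def using Pg prime by auto
  then show ?thesis using IP PS by auto
qed

lemma gr_char:
  assumes I: "graded_ideal G R A I"
  shows "gr_radical G R A I = {x \<in> carrier R. \<forall>p \<in> Spec_g G R A. I \<subseteq> p \<longrightarrow> x \<in> p}"
proof
  show "gr_radical G R A I \<subseteq> {x \<in> carrier R. \<forall>p \<in> Spec_g G R A. I \<subseteq> p \<longrightarrow> x \<in> p}"
  proof
    fix x assume x: "x \<in> gr_radical G R A I"
    then have xc: "x \<in> carrier R" and pw: "\<And>g. g \<in> carrier G \<Longrightarrow> \<exists>n::nat. gcomp G R A x g [^] n \<in> I"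
      unfolding gr_radical_def by auto
    have "x \<in> p" if p: "p \<in> Spec_g G R A" and Ip: "I \<subseteq> p" for p
    proof (rule ideal_by_comps[OF gideal_ideal[OF spec_gideal[OF p]] xc])
      fix g assume g: "g \<in> carrier G"
      obtain n where n: "gcomp G R A x g [^] (n::nat) \<in> I" using pw[OF g] by auto
      have h: "gcomp G R A x g \<in> homog G A" using homogI[OF g D.gcomp_in[OF xc g]] .
      show "gcomp G R A x g \<in> p" using prime_pow[OF p h] n Ip by auto
    qed
    then show "x \<in> {x \<in> carrier R. \<forall>p \<in> Spec_g G R A. I \<subseteq> p \<longrightarrow> x \<in> p}" using xc by auto
  qed
next
  show "{x \<in> carrier R. \<forall>p \<in> Spec_g G R A. I \<subseteq> p \<longrightarrow> x \<in> p} \<subseteq> gr_radical G R A I"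
  proof
    fix x assume x: "x \<in> {x \<in> carrier R. \<forall>p \<in> Spec_g G R A. I \<subseteq> p \<longrightarrow> x \<in> p}"
    then have xc: "x \<in> carrier R" and allp: "\<And>p. p \<in> Spec_g G R A \<Longrightarrow> I \<subseteq> p \<Longrightarrow> x \<in> p" by auto
    have "\<exists>n::nat. gcomp G R A x g [^] n \<in> I" if g: "g \<in> carrier G" for g
    proof (rule ccontr)
      assume nn: "\<not> (\<exists>n::nat. gcomp G R A x g [^] n \<in> I)"
      let ?a = "gcomp G R A x g"
      have ac: "?a \<in> carrier R" using D.gcomp_carrier[OF xc g] .
      have ah: "?a \<in> homog G A" using homogI[OF g D.gcomp_in[OF xc g]] .
      let ?S = "{?a [^] (n::nat) | n. True}"
      have "\<exists>p \<in> Spec_g G R A. I \<subseteq> p \<and> p \<inter> ?S = {}"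
      proof (rule exists_prime[OF I])
        show "?S \<subseteq> carrier R" using ac by auto
        show "?S \<noteq> {}" by auto
      next
        fix s t assume "s \<in> ?S" "t \<in> ?S"
        then obtain m n where "s = ?a [^] (m::nat)" "t = ?a [^] (n::nat)" by auto
        then have "s \<otimes> t = ?a [^] (m + n)" using ac nat_pow_mult by auto
        then show "s \<otimes> t \<in> ?S" by auto
      next
        fix s assume "s \<in> ?S"
        then obtain n where n: "s = ?a [^] (n::nat)" by auto
        show "s = \<one> \<or> s \<in> homog G A"
        proof (cases n)
          case 0 then show ?thesis using n by simp
        next
          case (Suc m) then show ?thesis using n homog_pow[OF ah] by simp
        qed
      next
        show "I \<inter> ?S = {}" using nn by auto
      qed
      then obtain p where p: "p \<in> Spec_g G R A" "I \<subseteq> p" "p \<inter> ?S = {}" by auto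
      have "x \<in> p" using allp p by auto
      then have "?a \<in> p" using gideal_comp[OF spec_gideal[OF p(1)] _ g] by auto
      then have "?a [^] (1::nat) \<in> p" using ac by simp
      moreover have "?a [^] (1::nat) \<in> ?S" by blast
      ultimately have "?a [^] (1::nat) \<in> p \<inter> ?S" by blast
      then show False using p(3) by auto
    qed
    then show "x \<in> gr_radical G R A I" unfolding gr_radical_def using xc by auto
  qed
qed

lemma gr_sub_prime: "graded_ideal G R A I \<Longrightarrow> p \<in> Spec_g G R A \<Longrightarrow> I \<subseteq> p \<Longrightarrow> gr_radical G R A I \<subseteq> p"
  using gr_char by auto

lemma gr_contains:
  assumes I: "graded_ideal G R A I" shows "I \<subseteq> gr_radical G R A I"
proof -
  have "I \<subseteq> carrier R" using ideal_sub[OF gideal_ideal[OF I]] .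
  then show ?thesis unfolding gr_char[OF I] by auto
qed

lemma gr_gideal:
  assumes I: "graded_ideal G R A I"
  shows "graded_ideal G R A (gr_radical G R A I)"
proof -
  have "gr_radical G R A I = \<Inter>(insert (carrier R) {p \<in> Spec_g G R A. I \<subseteq> p})"
    unfolding gr_char[OF I] by auto
  moreover have "graded_ideal G R A (\<Inter>(insert (carrier R) {p \<in> Spec_g G R A. I \<subseteq> p}))"
    by (rule gideal_Inter) (auto intro: gideal_carrier spec_gideal)
  ultimately show ?thesis by simp
qed

lemma gr_spec: assumes p: "p \<in> Spec_g G R A" shows "gr_radical G R A p = p"
proof
  show "gr_radical G R A p \<subseteq> p" by (rule gr_sub_prime[OF spec_gideal[OF p] p subset_refl])
  show "p \<subseteq> gr_radical G R A p" by (rule gr_contains[OF spec_gideal[OF p]])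
qed

lemma gr_mono: "graded_ideal G R A I \<Longrightarrow> graded_ideal G R A J \<Longrightarrow> I \<subseteq> J \<Longrightarrow>
   gr_radical G R A I \<subseteq> gr_radical G R A J"
  using gr_char by auto

lemma exists_prime_above:
  assumes I: "graded_ideal G R A I" and ne: "I \<noteq> carrier R"
  shows "\<exists>p \<in> Spec_g G R A. I \<subseteq> p"
proof -
  have "\<one> \<notin> I" using ne I gideal_ideal ideal.one_imp_carrier by metis
  then have "\<exists>p \<in> Spec_g G R A. I \<subseteq> p \<and> p \<inter> {\<one>} = {}"
    by (intro exists_prime[OF I]) auto
  then show ?thesis by auto
qed

lemma gr_proper:
  assumes I: "graded_ideal G R A I" and ne: "I \<noteq> carrier R"
  shows "gr_radical G R A I \<noteq> carrier R"
proof
  assume eq: "gr_radical G R A I = carrier R"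
  obtain p where p: "p \<in> Spec_g G R A" "I \<subseteq> p" using exists_prime_above[OF I ne] by auto
  have "carrier R \<subseteq> p" using gr_sub_prime[OF I p] eq by simp
  moreover have "p \<subseteq> carrier R" using ideal_sub[OF gideal_ideal[OF spec_gideal[OF p(1)]]] .
  ultimately show False using spec_proper[OF p(1)] by auto
qed

lemma gr_homog_pow:
  assumes I: "graded_ideal G R A I" and a: "a \<in> homog G A" and an: "a [^] (n::nat) \<in> gr_radical G R A I"
  shows "a \<in> gr_radical G R A I"
proof -
  have ac: "a \<in> carrier R" using a homog_carrier by auto
  have "a \<in> p" if p: "p \<in> Spec_g G R A" "I \<subseteq> p" for p
  proof -
    have "a [^] n \<in> p" using an p unfolding gr_char[OF I] by auto
    then show ?thesis using prime_pow[OF p(1) a] by auto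
  qed
  then show ?thesis unfolding gr_char[OF I] using ac by auto
qed

lemma gr_homog_D:
  assumes a: "a \<in> homog G A" and aI: "a \<in> gr_radical G R A I"
  shows "\<exists>n::nat. a [^] n \<in> I"
proof -
  obtain h where h: "h \<in> carrier G" "a \<in> A h" using a homogE by blast
  then show ?thesis using aI gcomp_homog_self[OF h] unfolding gr_radical_def by force
qed

definition gen_g :: "'a set \<Rightarrow> 'a set" where
  "gen_g Y = \<Inter>{I. graded_ideal G R A I \<and> Y \<subseteq> I}"

lemma gen_gideal: "Y \<subseteq> carrier R \<Longrightarrow> graded_ideal G R A (gen_g Y)"
  unfolding gen_g_def by (rule gideal_Inter) (auto intro: gideal_carrier)

lemma gen_sub: "Y \<subseteq> carrier R \<Longrightarrow> Y \<subseteq> gen_g Y"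
  unfolding gen_g_def by auto

lemma gen_min: "graded_ideal G R A I \<Longrightarrow> Y \<subseteq> I \<Longrightarrow> gen_g Y \<subseteq> I"
  unfolding gen_g_def by auto

lemma gen_mono: "Y \<subseteq> Z \<Longrightarrow> Z \<subseteq> carrier R \<Longrightarrow> gen_g Y \<subseteq> gen_g Z"
  using gen_min[OF gen_gideal[of Z], of Y] gen_sub[of Z] by auto

lemma gen_finite:
  assumes Y: "Y \<subseteq> carrier R" and x: "x \<in> gen_g Y"
  shows "\<exists>Y'. Y' \<subseteq> Y \<and> finite Y' \<and> x \<in> gen_g Y'"
proof -
  let ?C = "{gen_g Y' | Y'. Y' \<subseteq> Y \<and> finite Y'}"
  have "graded_ideal G R A (\<Union>?C)"
  proof (rule gideal_Union_directed)
    show "?C \<noteq> {}" by auto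
  next
    fix I assume "I \<in> ?C"
    then obtain Y' where "I = gen_g Y'" "Y' \<subseteq> Y" by auto
    then show "graded_ideal G R A I" using gen_gideal Y by auto
  next
    fix I J assume "I \<in> ?C" "J \<in> ?C"
    then obtain Y1 Y2 where Y12: "I = gen_g Y1" "Y1 \<subseteq> Y" "finite Y1" "J = gen_g Y2" "Y2 \<subseteq> Y" "finite Y2" by auto
    have "gen_g (Y1 \<union> Y2) \<in> ?C" using Y12 by auto
    moreover have U: "Y1 \<union> Y2 \<subseteq> carrier R" using Y12 Y by auto
    have "I \<subseteq> gen_g (Y1 \<union> Y2)" using Y12(1) gen_mono[OF _ U, of Y1] by auto
    moreover have "J \<subseteq> gen_g (Y1 \<union> Y2)" using Y12(4) gen_mono[OF _ U, of Y2] by auto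
    ultimately show "\<exists>K\<in>?C. I \<subseteq> K \<and> J \<subseteq> K" by blast
  qed
  moreover have "Y \<subseteq> \<Union>?C"
  proof
    fix y assume y: "y \<in> Y"
    have "y \<in> gen_g {y}" using gen_sub[of "{y}"] y Y by auto
    moreover have "gen_g {y} \<in> ?C" using y by auto
    ultimately show "y \<in> \<Union>?C" by blast
  qed
  ultimately have "gen_g Y \<subseteq> \<Union>?C" by (rule gen_min)
  then show ?thesis using x by auto
qed

end


locale grmod = grring G R A for G :: "'g monoid" and R :: "'a ring" (structure) and A +
  fixes M :: "('a,'b) module" and B :: "'g \<Rightarrow> 'b set"
  assumes gm: "graded_module G R A M B"
begin

sublocale module R M using gm unfolding graded_module_def by auto
sublocale DM: dsd G M B
  using gm unfolding graded_module_def by (auto intro!: dsd.intro M.abelian_group_axioms)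

lemma smult_B: "g \<in> carrier G \<Longrightarrow> h \<in> carrier G \<Longrightarrow> a \<in> A g \<Longrightarrow> m \<in> B h \<Longrightarrow> a \<odot>\<^bsub>M\<^esub> m \<in> B (g \<otimes>\<^bsub>G\<^esub> h)"
  using gm unfolding graded_module_def by blast

lemma homogM_carrier: "homog G B \<subseteq> carrier M"
  unfolding homog_def using DM.A_sub by blast

lemma smult_homog: "a \<in> homog G A \<Longrightarrow> m \<in> homog G B \<Longrightarrow> a \<odot>\<^bsub>M\<^esub> m \<in> homog G B"
proof -
  assume a: "a \<in> homog G A" and m: "m \<in> homog G B"
  obtain g where g: "g \<in> carrier G" "a \<in> A g" using a homogE by blast
  obtain h where h: "h \<in> carrier G" "m \<in> B h" using m unfolding homog_def by blast
  have "a \<odot>\<^bsub>M\<^esub> m \<in> B (g \<otimes>\<^bsub>G\<^esub> h)" using smult_B g h by blast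
  then show ?thesis unfolding homog_def using g h by blast
qed

lemma smult_finsum_left:
  assumes "finite F" "f \<in> F \<rightarrow> carrier R" "m \<in> carrier M"
  shows "(\<Oplus>i\<in>F. f i) \<odot>\<^bsub>M\<^esub> m = (\<Oplus>\<^bsub>M\<^esub>i\<in>F. f i \<odot>\<^bsub>M\<^esub> m)"
  using assms
proof (induct F rule: finite_induct)
  case empty then show ?case by simp
next
  case (insert a F)
  then have fa: "f a \<in> carrier R" and fF: "f \<in> F \<rightarrow> carrier R" by auto
  have "(\<Oplus>i\<in>insert a F. f i) = f a \<oplus> (\<Oplus>i\<in>F. f i)"
    using insert fa fF by (simp add: finsum_insert)
  moreover have "(\<Oplus>\<^bsub>M\<^esub>i\<in>insert a F. f i \<odot>\<^bsub>M\<^esub> m) = f a \<odot>\<^bsub>M\<^esub> m \<oplus>\<^bsub>M\<^esub> (\<Oplus>\<^bsub>M\<^esub>i\<in>F. f i \<odot>\<^bsub>M\<^esub> m)"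
    using insert fa fF by (intro M.finsum_insert) auto
  ultimately show ?case using insert fa fF by (simp add: smult_l_distr finsum_closed)
qed

lemma gcompM_smult_homog:
  assumes x: "x \<in> carrier R" and h: "h \<in> carrier G" and y: "y \<in> B h" and g: "g \<in> carrier G"
  shows "gcomp G M B (x \<odot>\<^bsub>M\<^esub> y) (g \<otimes>\<^bsub>G\<^esub> h) = gcomp G R A x g \<odot>\<^bsub>M\<^esub> y"
proof -
  let ?sx = "{g \<in> carrier G. gcomp G R A x g \<noteq> \<zero>}"
  let ?c = "restrict (\<lambda>k. gcomp G R A x (k \<otimes>\<^bsub>G\<^esub> inv\<^bsub>G\<^esub> h) \<odot>\<^bsub>M\<^esub> y) (carrier G)"
  let ?F = "(\<lambda>k. k \<otimes>\<^bsub>G\<^esub> h) ` ?sx"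
  have yc: "y \<in> carrier M" using DM.A_sub h y by blast
  have kh: "\<And>k. k \<in> carrier G \<Longrightarrow> (k \<otimes>\<^bsub>G\<^esub> inv\<^bsub>G\<^esub> h) \<otimes>\<^bsub>G\<^esub> h = k"
    using h by (simp add: G.m_assoc)
  have hk: "\<And>k. k \<in> carrier G \<Longrightarrow> (k \<otimes>\<^bsub>G\<^esub> h) \<otimes>\<^bsub>G\<^esub> inv\<^bsub>G\<^esub> h = k"
    using h by (simp add: G.m_assoc)
  have inj: "inj_on (\<lambda>k. k \<otimes>\<^bsub>G\<^esub> h) ?sx"
    by (rule inj_onI) (use h in auto)
  have fin: "finite ?sx" using D.supp_finite x by blast
  have "gdecomp G M B (x \<odot>\<^bsub>M\<^esub> y) ?c"
  proof (rule DM.gdecomp_intro[where F="?F"])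
    show "?c \<in> extensional (carrier G)" by simp
    show "finite ?F" using fin by blast
    show "?F \<subseteq> carrier G" using h by auto
  next
    fix k assume k: "k \<in> carrier G"
    have k1: "k \<otimes>\<^bsub>G\<^esub> inv\<^bsub>G\<^esub> h \<in> carrier G" using k h by simp
    have "gcomp G R A x (k \<otimes>\<^bsub>G\<^esub> inv\<^bsub>G\<^esub> h) \<odot>\<^bsub>M\<^esub> y \<in> B ((k \<otimes>\<^bsub>G\<^esub> inv\<^bsub>G\<^esub> h) \<otimes>\<^bsub>G\<^esub> h)"
      by (rule smult_B[OF k1 h D.gcomp_in[OF x k1] y])
    then show "?c k \<in> B k" using k kh by simp
  next
    fix k assume k: "k \<in> carrier G" and nk: "k \<notin> ?F"
    have k1: "k \<otimes>\<^bsub>G\<^esub> inv\<^bsub>G\<^esub> h \<in> carrier G" using k h by simp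
    have "k \<otimes>\<^bsub>G\<^esub> inv\<^bsub>G\<^esub> h \<notin> ?sx"
    proof
      assume "k \<otimes>\<^bsub>G\<^esub> inv\<^bsub>G\<^esub> h \<in> ?sx"
      then have "(k \<otimes>\<^bsub>G\<^esub> inv\<^bsub>G\<^esub> h) \<otimes>\<^bsub>G\<^esub> h \<in> ?F" by blast
      then show False using nk kh k by simp
    qed
    then have "gcomp G R A x (k \<otimes>\<^bsub>G\<^esub> inv\<^bsub>G\<^esub> h) = \<zero>" using k1 by blast
    then show "?c k = \<zero>\<^bsub>M\<^esub>" using k yc by simp
  next
    have "x \<odot>\<^bsub>M\<^esub> y = (\<Oplus>g\<in>?sx. gcomp G R A x g) \<odot>\<^bsub>M\<^esub> y"
      using D.sum_comp x by simp
    also have "\<dots> = (\<Oplus>\<^bsub>M\<^esub>g\<in>?sx. gcomp G R A x g \<odot>\<^bsub>M\<^esub> y)"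
      by (rule smult_finsum_left) (use fin yc D.gcomp_carrier x in auto)
    also have "\<dots> = (\<Oplus>\<^bsub>M\<^esub>g\<in>?sx. ?c (g \<otimes>\<^bsub>G\<^esub> h))"
      by (rule M.finsum_cong') (use h hk D.gcomp_carrier x yc in auto)
    also have "\<dots> = (\<Oplus>\<^bsub>M\<^esub>k\<in>?F. ?c k)"
      by (rule M.finsum_reindex[symmetric]) (use inj D.gcomp_carrier x yc h in auto)
    finally show "x \<odot>\<^bsub>M\<^esub> y = (\<Oplus>\<^bsub>M\<^esub>k\<in>?F. ?c k)" .
  qed
  then have "gcomp G M B (x \<odot>\<^bsub>M\<^esub> y) = ?c" by (rule DM.decomp_unique)
  then show ?thesis using g h hk by simp
qed


lemma gsub_sub: "graded_submodule G R M B K \<Longrightarrow> submodule K R M"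
  unfolding graded_submodule_def by blast

lemma gsub_comp: "graded_submodule G R M B K \<Longrightarrow> x \<in> K \<Longrightarrow> g \<in> carrier G \<Longrightarrow> gcomp G M B x g \<in> K"
  unfolding graded_submodule_def by blast

lemma sub_carrier: "submodule K R M \<Longrightarrow> K \<subseteq> carrier M"
  using submoduleE(1) by blast

lemma sub_zero: "submodule K R M \<Longrightarrow> \<zero>\<^bsub>M\<^esub> \<in> K"
  using submodule.axioms(1) subgroup.one_closed by fastforce

lemma sub_add: "submodule K R M \<Longrightarrow> a \<in> K \<Longrightarrow> b \<in> K \<Longrightarrow> a \<oplus>\<^bsub>M\<^esub> b \<in> K"
  using submoduleE(5) by blast

lemma sub_neg: "submodule K R M \<Longrightarrow> a \<in> K \<Longrightarrow> \<ominus>\<^bsub>M\<^esub> a \<in> K"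
  using submoduleE(3) by blast

lemma sub_smult: "submodule K R M \<Longrightarrow> r \<in> carrier R \<Longrightarrow> a \<in> K \<Longrightarrow> r \<odot>\<^bsub>M\<^esub> a \<in> K"
  using submoduleE(4) by blast

lemma colon_ideal:
  assumes K: "submodule K R M"
  shows "ideal (colon R M K) R"
proof (rule idealI')
  show "colon R M K \<subseteq> carrier R" unfolding colon_def by auto
  show "\<zero> \<in> colon R M K" unfolding colon_def using sub_zero[OF K] by auto
next
  fix a b assume a: "a \<in> colon R M K" and b: "b \<in> colon R M K"
  show "a \<oplus> b \<in> colon R M K" unfolding colon_def
  proof (intro CollectI conjI ballI)
    show "a \<oplus> b \<in> carrier R" using a b unfolding colon_def by auto
    fix m assume m: "m \<in> carrier M"
    have "(a \<oplus> b) \<odot>\<^bsub>M\<^esub> m = a \<odot>\<^bsub>M\<^esub> m \<oplus>\<^bsub>M\<^esub> b \<odot>\<^bsub>M\<^esub> m"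
      using a b m smult_l_distr unfolding colon_def by auto
    then show "(a \<oplus> b) \<odot>\<^bsub>M\<^esub> m \<in> K" using a b m sub_add[OF K] unfolding colon_def by auto
  qed
next
  fix a assume a: "a \<in> colon R M K"
  show "\<ominus> a \<in> colon R M K" unfolding colon_def
  proof (intro CollectI conjI ballI)
    show "\<ominus> a \<in> carrier R" using a unfolding colon_def by auto
    fix m assume m: "m \<in> carrier M"
    have "(\<ominus> a) \<odot>\<^bsub>M\<^esub> m = \<ominus>\<^bsub>M\<^esub> (a \<odot>\<^bsub>M\<^esub> m)"
      using a m smult_l_minus unfolding colon_def by auto
    then show "(\<ominus> a) \<odot>\<^bsub>M\<^esub> m \<in> K" using a m sub_neg[OF K] unfolding colon_def by auto
  qed
next
  fix a x assume a: "a \<in> colon R M K" and x: "x \<in> carrier R"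
  show "x \<otimes> a \<in> colon R M K" unfolding colon_def
  proof (intro CollectI conjI ballI)
    show "x \<otimes> a \<in> carrier R" using a x unfolding colon_def by auto
    fix m assume m: "m \<in> carrier M"
    have "(x \<otimes> a) \<odot>\<^bsub>M\<^esub> m = x \<odot>\<^bsub>M\<^esub> (a \<odot>\<^bsub>M\<^esub> m)"
      using a m x smult_assoc1 unfolding colon_def by auto
    then show "(x \<otimes> a) \<odot>\<^bsub>M\<^esub> m \<in> K" using a m x sub_smult[OF K] unfolding colon_def by auto
  qed
qed

lemma colon_by_homog:
  assumes K: "submodule K R M" and r: "r \<in> carrier R"
    and hm: "\<And>m. m \<in> homog G B \<Longrightarrow> r \<odot>\<^bsub>M\<^esub> m \<in> K"
  shows "r \<in> colon R M K"
  unfolding colon_def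
proof (intro CollectI conjI ballI r)
  fix m assume m: "m \<in> carrier M"
  let ?S = "{g \<in> carrier G. gcomp G M B m g \<noteq> \<zero>\<^bsub>M\<^esub>}"
  have "r \<odot>\<^bsub>M\<^esub> m = r \<odot>\<^bsub>M\<^esub> (\<Oplus>\<^bsub>M\<^esub>g\<in>?S. gcomp G M B m g)"
    using DM.sum_comp[OF m] by simp
  also have "\<dots> = (\<Oplus>\<^bsub>M\<^esub>g\<in>?S. r \<odot>\<^bsub>M\<^esub> gcomp G M B m g)"
    by (rule finsum_smult_ldistr) (use DM.supp_finite[OF m] r DM.gcomp_carrier[OF m] in auto)
  also have "\<dots> \<in> K"
  proof (rule DM.finsum_in_set)
    show "finite ?S" using DM.supp_finite[OF m] .
    show "\<zero>\<^bsub>M\<^esub> \<in> K" using sub_zero[OF K] .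
    show "\<And>a b. a \<in> K \<Longrightarrow> b \<in> K \<Longrightarrow> a \<oplus>\<^bsub>M\<^esub> b \<in> K" using sub_add[OF K] .
    show "K \<subseteq> carrier M" using sub_carrier[OF K] .
    fix g assume "g \<in> ?S"
    then have g: "g \<in> carrier G" by auto
    have "gcomp G M B m g \<in> homog G B" unfolding homog_def using DM.gcomp_in[OF m g] g by blast
    then show "r \<odot>\<^bsub>M\<^esub> gcomp G M B m g \<in> K" using hm by auto
  qed
  finally show "r \<odot>\<^bsub>M\<^esub> m \<in> K" .
qed

lemma colon_graded:
  assumes K: "graded_submodule G R M B K"
  shows "graded_ideal G R A (colon R M K)"
  unfolding graded_ideal_def
proof (intro conjI ballI)
  show "ideal (colon R M K) R" using colon_ideal gsub_sub[OF K] by auto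
  fix r g assume r: "r \<in> colon R M K" and g: "g \<in> carrier G"
  have rc: "r \<in> carrier R" using r unfolding colon_def by auto
  show "gcomp G R A r g \<in> colon R M K"
  proof (rule colon_by_homog[OF gsub_sub[OF K] D.gcomp_carrier[OF rc g]])
    fix m assume "m \<in> homog G B"
    then obtain h where h: "h \<in> carrier G" "m \<in> B h" unfolding homog_def by blast
    have mc: "m \<in> carrier M" using DM.A_sub h by blast
    have "r \<odot>\<^bsub>M\<^esub> m \<in> K" using r mc unfolding colon_def by auto
    then have "gcomp G M B (r \<odot>\<^bsub>M\<^esub> m) (g \<otimes>\<^bsub>G\<^esub> h) \<in> K" using gsub_comp[OF K] g h by auto
    then show "gcomp G R A r g \<odot>\<^bsub>M\<^esub> m \<in> K" using gcompM_smult_homog[OF rc h(1) h(2) g] by simp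
  qed
qed

lemma colon_mono: "K \<subseteq> L \<Longrightarrow> colon R M K \<subseteq> colon R M L"
  unfolding colon_def by auto

lemma ann_sub_colon: "\<zero>\<^bsub>M\<^esub> \<in> K \<Longrightarrow> ann R M \<subseteq> colon R M K"
  unfolding ann_def colon_def by auto

lemma one_notin_colon:
  assumes "K \<subseteq> carrier M" "K \<noteq> carrier M" shows "\<one> \<notin> colon R M K"
  using assms unfolding colon_def by auto

lemma colon_proper:
  assumes K: "graded_submodule G R M B K" "K \<noteq> carrier M"
  shows "colon R M K \<noteq> carrier R"
  using one_notin_colon[OF sub_carrier[OF gsub_sub[OF K(1)]] K(2)] by auto

lemma gps_gsub: "graded_prime_submodule G R A M B P \<Longrightarrow> graded_submodule G R M B P"
  unfolding graded_prime_submodule_def by blast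

lemma gps_spec:
  assumes P: "graded_prime_submodule G R A M B P"
  shows "colon R M P \<in> Spec_g G R A"
proof -
  have Pg: "graded_submodule G R M B P" and Pne: "P \<noteq> carrier M"
    and Pp: "\<And>r m. r \<in> homog G A \<Longrightarrow> m \<in> homog G B \<Longrightarrow> r \<odot>\<^bsub>M\<^esub> m \<in> P \<Longrightarrow> m \<in> P \<or> r \<in> colon R M P"
    using P unfolding graded_prime_submodule_def by auto
  have prime: "a \<in> colon R M P \<or> b \<in> colon R M P"
    if a: "a \<in> homog G A" and b: "b \<in> homog G A" and ab: "a \<otimes> b \<in> colon R M P" for a b
  proof (rule disjCI)
    assume nb: "b \<notin> colon R M P"
    have ac: "a \<in> carrier R" and bc: "b \<in> carrier R" using a b homog_carrier by auto
    obtain m where m: "m \<in> homog G B" "b \<odot>\<^bsub>M\<^esub> m \<notin> P"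
      using colon_by_homog[OF gsub_sub[OF Pg] bc] nb by blast
    have mc: "m \<in> carrier M" using m homogM_carrier by auto
    have "(a \<otimes> b) \<odot>\<^bsub>M\<^esub> m \<in> P" using ab mc unfolding colon_def by auto
    then have "a \<odot>\<^bsub>M\<^esub> (b \<odot>\<^bsub>M\<^esub> m) \<in> P" using smult_assoc1 ac bc mc by simp
    then show "a \<in> colon R M P" using Pp[OF a smult_homog[OF b m(1)]] m(2) by blast
  qed
  show ?thesis unfolding Spec_g_def graded_prime_ideal_def
    using colon_graded[OF Pg] colon_proper[OF Pg Pne] prime by blast
qed

lemma gsub_Inter:
  assumes "\<And>P. P \<in> C \<Longrightarrow> graded_submodule G R M B P"
  shows "graded_submodule G R M B (carrier M \<inter> \<Inter>C)"
  unfolding graded_submodule_def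
proof (intro conjI ballI)
  have sub: "\<And>P. P \<in> C \<Longrightarrow> submodule P R M" using assms gsub_sub by blast
  show "submodule (carrier M \<inter> \<Inter>C) R M"
  proof (rule submoduleI)
    show "carrier M \<inter> \<Inter>C \<subseteq> carrier M" by auto
    show "\<zero>\<^bsub>M\<^esub> \<in> carrier M \<inter> \<Inter>C" using sub sub_zero by auto
    show "\<And>a. a \<in> carrier M \<inter> \<Inter>C \<Longrightarrow> \<ominus>\<^bsub>M\<^esub> a \<in> carrier M \<inter> \<Inter>C" using sub sub_neg by auto
    show "\<And>a b. a \<in> carrier M \<inter> \<Inter>C \<Longrightarrow> b \<in> carrier M \<inter> \<Inter>C \<Longrightarrow> a \<oplus>\<^bsub>M\<^esub> b \<in> carrier M \<inter> \<Inter>C"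
      using sub sub_add by auto
    show "\<And>a x. a \<in> carrier R \<Longrightarrow> x \<in> carrier M \<inter> \<Inter>C \<Longrightarrow> a \<odot>\<^bsub>M\<^esub> x \<in> carrier M \<inter> \<Inter>C"
      using sub sub_smult by auto
  qed
  fix x g assume x: "x \<in> carrier M \<inter> \<Inter>C" and g: "g \<in> carrier G"
  show "gcomp G M B x g \<in> carrier M \<inter> \<Inter>C"
    using DM.gcomp_carrier[of x g] gsub_comp[OF assms] x g by auto
qed

lemma colon_Inter: "colon R M (carrier M \<inter> \<Inter>C) = {r \<in> carrier R. \<forall>P\<in>C. r \<in> colon R M P}"
  unfolding colon_def by auto

definition Kof :: "'a set \<Rightarrow> 'b set" where
  "Kof J = carrier M \<inter> \<Inter>{P. graded_prime_submodule G R A M B P \<and> J \<subseteq> colon R M P}"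

lemma Kof_gsub: "graded_submodule G R M B (Kof J)"
  unfolding Kof_def by (rule gsub_Inter) (auto intro: gps_gsub)

lemma J_sub_colon_Kof: "J \<subseteq> carrier R \<Longrightarrow> J \<subseteq> colon R M (Kof J)"
  unfolding Kof_def colon_Inter by auto

lemma GrM_eq: "GrM G R A M B Q = carrier M \<inter> \<Inter>{P. graded_prime_submodule G R A M B P \<and> Q \<subseteq> P}"
  unfolding GrM_def by simp

lemma GrM_gsub: "graded_submodule G R M B (GrM G R A M B Q)"
  unfolding GrM_eq by (rule gsub_Inter) (auto intro: gps_gsub)


abbreviation pQ :: "'b set \<Rightarrow> 'a set" where
  "pQ Q \<equiv> gr_radical G R A (colon R M Q)"

lemma qp_gsub: "Q \<in> qpSpec G R A M B \<Longrightarrow> graded_submodule G R M B Q"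
  unfolding qpSpec_def graded_qp_submodule_def by blast

lemma qp_proper: "Q \<in> qpSpec G R A M B \<Longrightarrow> Q \<noteq> carrier M"
  unfolding qpSpec_def graded_qp_submodule_def by blast

lemma qp_cond: "Q \<in> qpSpec G R A M B \<Longrightarrow> r \<in> homog G A \<Longrightarrow> m \<in> homog G B \<Longrightarrow> r \<odot>\<^bsub>M\<^esub> m \<in> Q \<Longrightarrow>
   r \<in> pQ Q \<or> m \<in> GrM G R A M B Q"
  unfolding qpSpec_def graded_qp_submodule_def by blast

lemma qp_primeful: "Q \<in> qpSpec G R A M B \<Longrightarrow> p \<in> Spec_g G R A \<Longrightarrow> colon R M Q \<subseteq> p \<Longrightarrow>
   \<exists>P. graded_prime_submodule G R A M B P \<and> Q \<subseteq> P \<and> colon R M P = p"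
  unfolding qpSpec_def graded_primeful_def Spec_g_def by blast

lemma qp_colon_graded: "Q \<in> qpSpec G R A M B \<Longrightarrow> graded_ideal G R A (colon R M Q)"
  using colon_graded qp_gsub by blast

lemma qp_colon_proper: "Q \<in> qpSpec G R A M B \<Longrightarrow> colon R M Q \<noteq> carrier R"
  using colon_proper qp_gsub qp_proper by blast

lemma colon_GrM:
  assumes Q: "Q \<in> qpSpec G R A M B"
  shows "colon R M (GrM G R A M B Q) = pQ Q"
proof -
  have "colon R M (GrM G R A M B Q) = {r \<in> carrier R. \<forall>P\<in>{P. graded_prime_submodule G R A M B P \<and> Q \<subseteq> P}. r \<in> colon R M P}"
    unfolding GrM_eq colon_Inter by simp
  also have "\<dots> = {x \<in> carrier R. \<forall>p \<in> Spec_g G R A. colon R M Q \<subseteq> p \<longrightarrow> x \<in> p}"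
  proof (intro Collect_cong conj_cong refl iffI ballI impI)
    fix x p assume x: "x \<in> carrier R" and allP: "\<forall>P\<in>{P. graded_prime_submodule G R A M B P \<and> Q \<subseteq> P}. x \<in> colon R M P"
      and p: "p \<in> Spec_g G R A" and Qp: "colon R M Q \<subseteq> p"
    obtain P where "graded_prime_submodule G R A M B P" "Q \<subseteq> P" "colon R M P = p"
      using qp_primeful[OF Q p Qp] by blast
    then show "x \<in> p" using allP by auto
  next
    fix x P assume x: "x \<in> carrier R" and allp: "\<forall>p \<in> Spec_g G R A. colon R M Q \<subseteq> p \<longrightarrow> x \<in> p"
      and P: "P \<in> {P. graded_prime_submodule G R A M B P \<and> Q \<subseteq> P}"
    then have "colon R M P \<in> Spec_g G R A" "colon R M Q \<subseteq> colon R M P"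
      using gps_spec colon_mono by auto
    then show "x \<in> colon R M P" using allp by auto
  qed
  also have "\<dots> = pQ Q" using gr_char[OF qp_colon_graded[OF Q]] by simp
  finally show ?thesis .
qed

lemma colon_sub_pQ: "Q \<in> qpSpec G R A M B \<Longrightarrow> colon R M Q \<subseteq> pQ Q"
  using gr_contains qp_colon_graded by blast

lemma ann_sub_pQ:
  assumes Q: "Q \<in> qpSpec G R A M B" shows "ann R M \<subseteq> pQ Q"
proof -
  have "\<zero>\<^bsub>M\<^esub> \<in> Q" using sub_zero[OF gsub_sub[OF qp_gsub[OF Q]]] .
  then show ?thesis using ann_sub_colon colon_sub_pQ[OF Q] by blast
qed

lemma pQ_spec:
  assumes Q: "Q \<in> qpSpec G R A M B"
  shows "pQ Q \<in> Spec_g G R A"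
proof -
  let ?I = "colon R M Q"
  have Ig: "graded_ideal G R A ?I" using qp_colon_graded[OF Q] .
  have prime: "a \<in> pQ Q \<or> b \<in> pQ Q"
    if a: "a \<in> homog G A" and b: "b \<in> homog G A" and ab: "a \<otimes> b \<in> pQ Q" for a b
  proof (cases "a \<in> pQ Q")
    case True then show ?thesis by blast
  next
    case False
    note na = False
    have ac: "a \<in> carrier R" and bc: "b \<in> carrier R" using a b homog_carrier by auto
    obtain n where n: "(a \<otimes> b) [^] (n::nat) \<in> ?I" using gr_homog_D[OF homog_mult[OF a b] ab] by blast
    have "n \<noteq> 0"
    proof
      assume "n = 0"
      then have "\<one> \<in> ?I" using n by simp
      then show False using qp_colon_proper[OF Q] ideal.one_imp_carrier[OF gideal_ideal[OF Ig]] by auto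
    qed
    then obtain k where k: "n = Suc k" by (cases n) auto
    have an: "a [^] n \<in> homog G A" using homog_pow[OF a] k by simp
    have bn: "b [^] n \<in> homog G A" using homog_pow[OF b] k by simp
    have bnc: "b [^] n \<in> carrier R" using bc by simp
    have "a [^] n \<notin> pQ Q" using gr_homog_pow[OF Ig a] na by blast
    have "b [^] n \<odot>\<^bsub>M\<^esub> m \<in> GrM G R A M B Q" if m: "m \<in> homog G B" for m
    proof -
      have mc: "m \<in> carrier M" using m homogM_carrier by auto
      have "(a \<otimes> b) [^] n \<odot>\<^bsub>M\<^esub> m \<in> Q" using n mc unfolding colon_def by auto
      moreover have "(a \<otimes> b) [^] n = a [^] n \<otimes> b [^] n" using ac bc nat_pow_distrib by simp
      ultimately have "a [^] n \<odot>\<^bsub>M\<^esub> (b [^] n \<odot>\<^bsub>M\<^esub> m) \<in> Q" using smult_assoc1 ac bc mc by simp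
      then show ?thesis using qp_cond[OF Q an smult_homog[OF bn m]] \<open>a [^] n \<notin> pQ Q\<close> by blast
    qed
    then have "b [^] n \<in> colon R M (GrM G R A M B Q)"
      using colon_by_homog[OF gsub_sub[OF GrM_gsub] bnc] by blast
    then have "b [^] n \<in> pQ Q" using colon_GrM[OF Q] by simp
    then show ?thesis using gr_homog_pow[OF Ig b] by blast
  qed
  show ?thesis unfolding Spec_g_def graded_prime_ideal_def
    using gr_gideal[OF Ig] gr_proper[OF Ig qp_colon_proper[OF Q]] prime by blast
qed

lemma pQ_P:
  assumes Q: "Q \<in> qpSpec G R A M B"
  shows "\<exists>P. graded_prime_submodule G R A M B P \<and> Q \<subseteq> P \<and> colon R M P = pQ Q"
  using qp_primeful[OF Q pQ_spec[OF Q] colon_sub_pQ[OF Q]] .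

end



context grmod begin

definition Cl :: "'a set \<Rightarrow> 'b set set" where
  "Cl J = {Q \<in> qpSpec G R A M B. J \<subseteq> pQ Q}"

lemma Cl_sub: "Cl J \<subseteq> qpSpec G R A M B" unfolding Cl_def by auto

lemma qpV_Cl: "qpV G R A M B K = Cl (gr_radical G R A (colon R M K))"
  unfolding qpV_def Cl_def by simp

lemma pQ_sub: "Q \<in> qpSpec G R A M B \<Longrightarrow> pQ Q \<subseteq> carrier R"
  unfolding gr_radical_def by auto

lemma pQ_ideal: "Q \<in> qpSpec G R A M B \<Longrightarrow> ideal (pQ Q) R"
  using gideal_ideal spec_gideal pQ_spec by blast

lemma Cl_Kof:
  assumes J: "J \<subseteq> carrier R"
  shows "qpV G R A M B (Kof J) = Cl J"
  unfolding qpV_Cl Cl_def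
proof (intro Collect_cong conj_cong refl iffI)
  fix Q assume Q: "Q \<in> qpSpec G R A M B"
  have Kg: "graded_ideal G R A (colon R M (Kof J))" using colon_graded[OF Kof_gsub] .
  {
    assume "gr_radical G R A (colon R M (Kof J)) \<subseteq> pQ Q"
    then show "J \<subseteq> pQ Q" using J_sub_colon_Kof[OF J] gr_contains[OF Kg] by blast
  }
  {
    assume JQ: "J \<subseteq> pQ Q"
    obtain P where P: "graded_prime_submodule G R A M B P" "Q \<subseteq> P" "colon R M P = pQ Q"
      using pQ_P[OF Q] by blast
    have "Kof J \<subseteq> P" unfolding Kof_def using P JQ by auto
    then have "colon R M (Kof J) \<subseteq> pQ Q" using colon_mono P(3) by blast
    then show "gr_radical G R A (colon R M (Kof J)) \<subseteq> pQ Q"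
      using gr_sub_prime[OF Kg pQ_spec[OF Q]] by blast
  }
qed

definition Hc :: "'a set \<Rightarrow> 'a set" where
  "Hc J = {gcomp G R A x g | x g. x \<in> J \<and> g \<in> carrier G}"

lemma Hc_homog: "J \<subseteq> carrier R \<Longrightarrow> Hc J \<subseteq> homog G A"
  unfolding Hc_def using D.gcomp_in homogI by blast

lemma Hc_carrier: "J \<subseteq> carrier R \<Longrightarrow> Hc J \<subseteq> carrier R"
  using Hc_homog homog_carrier by blast

lemma gideal_Hc:
  assumes p: "graded_ideal G R A p" and J: "J \<subseteq> carrier R"
  shows "J \<subseteq> p \<longleftrightarrow> Hc J \<subseteq> p"
proof
  assume "J \<subseteq> p" then show "Hc J \<subseteq> p" unfolding Hc_def using gideal_comp[OF p] by blast
next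
  assume H: "Hc J \<subseteq> p"
  show "J \<subseteq> p"
  proof
    fix x assume x: "x \<in> J"
    show "x \<in> p"
    proof (rule ideal_by_comps[OF gideal_ideal[OF p]])
      show "x \<in> carrier R" using x J by auto
      fix g assume "g \<in> carrier G"
      then have "gcomp G R A x g \<in> Hc J" unfolding Hc_def using x by blast
      then show "gcomp G R A x g \<in> p" using H by auto
    qed
  qed
qed

lemma Cl_Hc: "J \<subseteq> carrier R \<Longrightarrow> Cl J = Cl (Hc J)"
  unfolding Cl_def using gideal_Hc spec_gideal pQ_spec by blast

lemma Cl_mono: "J \<subseteq> J' \<Longrightarrow> Cl J' \<subseteq> Cl J"
  unfolding Cl_def by auto

definition prodset :: "'a set \<Rightarrow> 'a set \<Rightarrow> 'a set" where
  "prodset J1 J2 = {a \<otimes> b | a b. a \<in> Hc J1 \<and> b \<in> Hc J2}"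

lemma prodset_carrier: "J1 \<subseteq> carrier R \<Longrightarrow> J2 \<subseteq> carrier R \<Longrightarrow> prodset J1 J2 \<subseteq> carrier R"
  unfolding prodset_def using Hc_carrier by blast

lemma Cl_Un:
  assumes J1: "J1 \<subseteq> carrier R" and J2: "J2 \<subseteq> carrier R"
  shows "Cl J1 \<union> Cl J2 = Cl (prodset J1 J2)"
proof
  show "Cl J1 \<union> Cl J2 \<subseteq> Cl (prodset J1 J2)"
  proof
    fix Q assume Q: "Q \<in> Cl J1 \<union> Cl J2"
    then have Qs: "Q \<in> qpSpec G R A M B" unfolding Cl_def by auto
    interpret I: ideal "pQ Q" R using pQ_ideal[OF Qs] .
    have "prodset J1 J2 \<subseteq> pQ Q"
    proof
      fix y assume "y \<in> prodset J1 J2"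
      then obtain a b where ab: "y = a \<otimes> b" "a \<in> Hc J1" "b \<in> Hc J2" unfolding prodset_def by blast
      have ac: "a \<in> carrier R" and bc: "b \<in> carrier R" using ab Hc_carrier J1 J2 by auto
      show "y \<in> pQ Q"
      proof (cases "Q \<in> Cl J1")
        case True
        then have "Hc J1 \<subseteq> pQ Q" using Cl_Hc[OF J1] unfolding Cl_def by auto
        then show ?thesis using ab I.I_r_closed bc by auto
      next
        case False
        then have "Q \<in> Cl J2" using Q by auto
        then have "Hc J2 \<subseteq> pQ Q" using Cl_Hc[OF J2] unfolding Cl_def by auto
        then show ?thesis using ab I.I_l_closed ac by auto
      qed
    qed
    then show "Q \<in> Cl (prodset J1 J2)" unfolding Cl_def using Qs by auto
  qed
next
  show "Cl (prodset J1 J2) \<subseteq> Cl J1 \<union> Cl J2"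
  proof
    fix Q assume Q: "Q \<in> Cl (prodset J1 J2)"
    then have Qs: "Q \<in> qpSpec G R A M B" and pr: "prodset J1 J2 \<subseteq> pQ Q" unfolding Cl_def by auto
    show "Q \<in> Cl J1 \<union> Cl J2"
    proof (cases "Hc J1 \<subseteq> pQ Q")
      case True
      then have "Q \<in> Cl (Hc J1)" unfolding Cl_def using Qs by auto
      then show ?thesis using Cl_Hc[OF J1] by auto
    next
      case False
      then obtain a where a: "a \<in> Hc J1" "a \<notin> pQ Q" by auto
      have "Hc J2 \<subseteq> pQ Q"
      proof
        fix b assume b: "b \<in> Hc J2"
        have "a \<otimes> b \<in> pQ Q" using pr a b unfolding prodset_def by blast
        then show "b \<in> pQ Q" using spec_prime[OF pQ_spec[OF Qs]] Hc_homog J1 J2 a b by blast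
      qed
      then have "Q \<in> Cl (Hc J2)" unfolding Cl_def using Qs by auto
      then show ?thesis using Cl_Hc[OF J2] by auto
    qed
  qed
qed

lemma Cl_Union: "Cl (\<Union>Js) = qpSpec G R A M B \<inter> \<Inter>(Cl ` Js)"
  unfolding Cl_def by auto

lemma Cl_carrier: "Cl (carrier R) = {}"
  unfolding Cl_def using pQ_sub pQ_spec spec_proper by blast

lemma Cl_empty: "Cl {} = qpSpec G R A M B"
  unfolding Cl_def by auto

lemma qz_pred_eq:
  "(\<lambda>U. \<exists>K. graded_submodule G R M B K \<and> U = qpSpec G R A M B - qpV G R A M B K)
   = (\<lambda>U. \<exists>J. J \<subseteq> carrier R \<and> U = qpSpec G R A M B - Cl J)"
proof (rule ext, rule iffI)
  fix U assume "\<exists>K. graded_submodule G R M B K \<and> U = qpSpec G R A M B - qpV G R A M B K"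
  then obtain K where "U = qpSpec G R A M B - qpV G R A M B K" by blast
  moreover have "gr_radical G R A (colon R M K) \<subseteq> carrier R" unfolding gr_radical_def by auto
  ultimately show "\<exists>J. J \<subseteq> carrier R \<and> U = qpSpec G R A M B - Cl J" unfolding qpV_Cl by blast
next
  fix U assume "\<exists>J. J \<subseteq> carrier R \<and> U = qpSpec G R A M B - Cl J"
  then obtain J where J: "J \<subseteq> carrier R" "U = qpSpec G R A M B - Cl J" by blast
  then have "U = qpSpec G R A M B - qpV G R A M B (Kof J)" using Cl_Kof[OF J(1)] by simp
  then show "\<exists>K. graded_submodule G R M B K \<and> U = qpSpec G R A M B - qpV G R A M B K"
    using Kof_gsub by blast
qed

lemma qz_istopology: "istopology (\<lambda>U. \<exists>J. J \<subseteq> carrier R \<and> U = qpSpec G R A M B - Cl J)"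
  unfolding istopology_def
proof (intro conjI allI impI)
  fix S T assume "\<exists>J. J \<subseteq> carrier R \<and> S = qpSpec G R A M B - Cl J"
    "\<exists>J. J \<subseteq> carrier R \<and> T = qpSpec G R A M B - Cl J"
  then obtain J1 J2 where J: "J1 \<subseteq> carrier R" "S = qpSpec G R A M B - Cl J1"
    "J2 \<subseteq> carrier R" "T = qpSpec G R A M B - Cl J2" by blast
  have "S \<inter> T = qpSpec G R A M B - (Cl J1 \<union> Cl J2)" using J by auto
  also have "\<dots> = qpSpec G R A M B - Cl (prodset J1 J2)" using Cl_Un J by simp
  finally have eq: "S \<inter> T = qpSpec G R A M B - Cl (prodset J1 J2)" .
  have P: "prodset J1 J2 \<subseteq> carrier R" using prodset_carrier[OF J(1) J(3)] .
  show "\<exists>J. J \<subseteq> carrier R \<and> S \<inter> T = qpSpec G R A M B - Cl J"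
    using P eq by blast
next
  fix KK assume KK: "\<forall>K\<in>KK. \<exists>J. J \<subseteq> carrier R \<and> K = qpSpec G R A M B - Cl J"
  define Jf where "Jf K = (SOME J. J \<subseteq> carrier R \<and> qpSpec G R A M B - Cl J = K)" for K
  have ex: "\<exists>J. J \<subseteq> carrier R \<and> qpSpec G R A M B - Cl J = K" if K: "K \<in> KK" for K
  proof -
    obtain J where "J \<subseteq> carrier R" "K = qpSpec G R A M B - Cl J" using KK K by blast
    then show ?thesis by blast
  qed
  have Jf0: "Jf K \<subseteq> carrier R \<and> qpSpec G R A M B - Cl (Jf K) = K" if K: "K \<in> KK" for K
    unfolding Jf_def by (rule someI_ex[OF ex[OF K]])
  have Jf: "\<And>K. K \<in> KK \<Longrightarrow> Jf K \<subseteq> carrier R" "\<And>K. K \<in> KK \<Longrightarrow> qpSpec G R A M B - Cl (Jf K) = K"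
    using Jf0 by blast+
  have "\<Union>KK = qpSpec G R A M B - Cl (\<Union>(Jf ` KK))"
  proof (rule Set.set_eqI)
    fix x
    have "x \<in> \<Union>KK \<longleftrightarrow> (\<exists>K\<in>KK. x \<in> qpSpec G R A M B - Cl (Jf K))" using Jf(2) by auto
    also have "\<dots> \<longleftrightarrow> x \<in> qpSpec G R A M B - Cl (\<Union>(Jf ` KK))" unfolding Cl_Union by blast
    finally show "x \<in> \<Union>KK \<longleftrightarrow> x \<in> qpSpec G R A M B - Cl (\<Union>(Jf ` KK))" .
  qed
  moreover have "\<Union>(Jf ` KK) \<subseteq> carrier R" using Jf by auto
  ultimately show "\<exists>J. J \<subseteq> carrier R \<and> \<Union>KK = qpSpec G R A M B - Cl J" by blast
qed

abbreviation TT where "TT \<equiv> quasi_zariski G R A M B"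

lemma TT_openin: "openin TT U \<longleftrightarrow> (\<exists>J. J \<subseteq> carrier R \<and> U = qpSpec G R A M B - Cl J)"
  unfolding quasi_zariski_def qz_pred_eq using qz_istopology by simp

lemma TT_topspace: "topspace TT = qpSpec G R A M B"
proof -
  have "openin TT (qpSpec G R A M B)" unfolding TT_openin using Cl_carrier by blast
  moreover have "\<And>U. openin TT U \<Longrightarrow> U \<subseteq> qpSpec G R A M B" unfolding TT_openin by auto
  ultimately show ?thesis unfolding topspace_def by blast
qed

lemma TT_closedin: "closedin TT F \<longleftrightarrow> (\<exists>J. J \<subseteq> carrier R \<and> F = Cl J)"
proof
  assume "closedin TT F"
  then have F: "F \<subseteq> qpSpec G R A M B" "openin TT (qpSpec G R A M B - F)"
    unfolding closedin_def TT_topspace by auto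
  then obtain J where J: "J \<subseteq> carrier R" "qpSpec G R A M B - F = qpSpec G R A M B - Cl J"
    unfolding TT_openin by blast
  then have "F = Cl J" using F(1) Cl_sub by blast
  then show "\<exists>J. J \<subseteq> carrier R \<and> F = Cl J" using J by blast
next
  assume "\<exists>J. J \<subseteq> carrier R \<and> F = Cl J"
  then obtain J where J: "J \<subseteq> carrier R" "F = Cl J" by blast
  then have "openin TT (qpSpec G R A M B - F)" unfolding TT_openin by blast
  then show "closedin TT F" unfolding closedin_def TT_topspace using J Cl_sub by blast
qed


definition Ustar :: bool where
  "Ustar \<longleftrightarrow> (\<forall>P\<in>qpSpec G R A M B. \<forall>Q\<in>qpSpec G R A M B. pQ P = pQ Q \<longrightarrow> P = Q)"

lemma in_Cl_self: "Q \<in> qpSpec G R A M B \<Longrightarrow> Q \<in> Cl (pQ Q)"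
  unfolding Cl_def by auto

lemma t0_iff_U: "t0_space TT \<longleftrightarrow> Ustar"
proof
  assume t0: "t0_space TT"
  show Ustar unfolding Ustar_def
  proof (intro ballI impI)
    fix P Q assume P: "P \<in> qpSpec G R A M B" and Q: "Q \<in> qpSpec G R A M B" and eq: "pQ P = pQ Q"
    show "P = Q"
    proof (rule ccontr)
      assume ne: "P \<noteq> Q"
      have t0': "\<forall>x\<in>qpSpec G R A M B. \<forall>y\<in>qpSpec G R A M B. x \<noteq> y \<longrightarrow> (\<exists>U. openin TT U \<and> (x \<notin> U \<longleftrightarrow> y \<in> U))"
        using t0 unfolding t0_space_def TT_topspace .
      obtain U where U: "openin TT U" "P \<notin> U \<longleftrightarrow> Q \<in> U"
        using t0'[rule_format, OF P Q ne] by (elim exE conjE)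
      obtain J where J: "J \<subseteq> carrier R" "U = qpSpec G R A M B - Cl J" using U(1) unfolding TT_openin by (elim exE conjE)
      have "P \<in> U \<longleftrightarrow> Q \<in> U" unfolding J(2) Cl_def using P Q eq by simp
      then show False using U(2) by simp
    qed
  qed
next
  assume U: Ustar
  show "t0_space TT" unfolding t0_space_def TT_topspace
  proof (intro ballI impI)
    fix P Q assume P: "P \<in> qpSpec G R A M B" and Q: "Q \<in> qpSpec G R A M B" and ne: "P \<noteq> Q"
    have ne2: "pQ P \<noteq> pQ Q" using U P Q ne unfolding Ustar_def by auto
    show "\<exists>U. openin TT U \<and> (P \<notin> U \<longleftrightarrow> Q \<in> U)"
    proof (cases "pQ P \<subseteq> pQ Q")
      case True
      then have nsub: "\<not> pQ Q \<subseteq> pQ P" using ne2 by auto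
      let ?U = "qpSpec G R A M B - Cl (pQ Q)"
      have "openin TT ?U" unfolding TT_openin using pQ_sub[OF Q] by blast
      moreover have "Q \<notin> ?U" using in_Cl_self[OF Q] by blast
      moreover have "P \<in> ?U" using P nsub unfolding Cl_def by blast
      ultimately show ?thesis by blast
    next
      case False
      let ?U = "qpSpec G R A M B - Cl (pQ P)"
      have "openin TT ?U" unfolding TT_openin using pQ_sub[OF P] by blast
      moreover have "P \<notin> ?U" using in_Cl_self[OF P] by blast
      moreover have "Q \<in> ?U" using Q False unfolding Cl_def by blast
      ultimately show ?thesis by blast
    qed
  qed
qed

lemma qpV_self: "Q \<in> qpSpec G R A M B \<Longrightarrow> qpV G R A M B Q = Cl (pQ Q)"
  using qpV_Cl by simp

lemma qpV_eq_iff: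
  assumes P: "P \<in> qpSpec G R A M B" and Q: "Q \<in> qpSpec G R A M B"
  shows "qpV G R A M B P = qpV G R A M B Q \<longleftrightarrow> pQ P = pQ Q"
proof
  assume "qpV G R A M B P = qpV G R A M B Q"
  then have eq: "Cl (pQ P) = Cl (pQ Q)" using qpV_self P Q by simp
  have "P \<in> Cl (pQ Q)" using eq in_Cl_self[OF P] by simp
  moreover have "Q \<in> Cl (pQ P)" using eq in_Cl_self[OF Q] by simp
  ultimately show "pQ P = pQ Q" unfolding Cl_def by auto
qed (simp add: qpV_self P Q)

lemma cond4_iff_U:
  "(\<forall>P\<in>qpSpec G R A M B. \<forall>Q\<in>qpSpec G R A M B. qpV G R A M B P = qpV G R A M B Q \<longrightarrow> P = Q) \<longleftrightarrow> Ustar"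
  unfolding Ustar_def using qpV_eq_iff by auto

lemma cond5_iff_U:
  "(\<forall>p\<in>Spec_g G R A. finite (qpSpec_at G R A M B p) \<and> card (qpSpec_at G R A M B p) \<le> 1) \<longleftrightarrow> Ustar"
proof
  assume c5: "\<forall>p\<in>Spec_g G R A. finite (qpSpec_at G R A M B p) \<and> card (qpSpec_at G R A M B p) \<le> 1"
  show Ustar unfolding Ustar_def
  proof (intro ballI impI)
    fix P Q assume P: "P \<in> qpSpec G R A M B" and Q: "Q \<in> qpSpec G R A M B" and eq: "pQ P = pQ Q"
    let ?S = "qpSpec_at G R A M B (pQ P)"
    have "P \<in> ?S" "Q \<in> ?S" unfolding qpSpec_at_def using P Q eq by auto
    moreover have "finite ?S" "card ?S \<le> 1" using c5 pQ_spec[OF P] by auto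
    ultimately show "P = Q" using card_le_Suc0_iff_eq by (metis One_nat_def)
  qed
next
  assume U: Ustar
  show "\<forall>p\<in>Spec_g G R A. finite (qpSpec_at G R A M B p) \<and> card (qpSpec_at G R A M B p) \<le> 1"
  proof
    fix p assume "p \<in> Spec_g G R A"
    let ?S = "qpSpec_at G R A M B p"
    have sub: "\<forall>a\<in>?S. \<forall>b\<in>?S. a = b" using U unfolding Ustar_def qpSpec_at_def by auto
    show "finite ?S \<and> card ?S \<le> 1"
    proof (cases "?S = {}")
      case True then show ?thesis by simp
    next
      case False
      then obtain x where "x \<in> ?S" by blast
      then have "?S = {x}" using sub by blast
      then show ?thesis by simp
    qed
  qed
qed

definition Dset :: "'a \<Rightarrow> 'b set set" where
  "Dset a = qpSpec G R A M B - Cl {a}"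

lemma D_open: "a \<in> carrier R \<Longrightarrow> openin TT (Dset a)"
  unfolding Dset_def TT_openin by blast

lemma ann_carrier: "ann R M \<subseteq> carrier R"
  unfolding ann_def colon_def by auto

lemma compact_D:
  assumes surj: "\<forall>p\<in>Spec_g G R A. ann R M \<subseteq> p \<longrightarrow> (\<exists>Q\<in>qpSpec G R A M B. pQ Q = p)"
    and ac: "a \<in> carrier R" and ah: "a = \<one> \<or> a \<in> homog G A"
  shows "compactin TT (Dset a)"
  unfolding compactin_def
proof (intro conjI allI impI)
  show "Dset a \<subseteq> topspace TT" unfolding Dset_def TT_topspace by auto
  fix UU assume UU: "(\<forall>U\<in>UU. openin TT U) \<and> Dset a \<subseteq> \<Union>UU"
  define Jf where "Jf W = (SOME J. J \<subseteq> carrier R \<and> qpSpec G R A M B - Cl J = W)" for W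
  have ex: "\<exists>J. J \<subseteq> carrier R \<and> qpSpec G R A M B - Cl J = W" if W: "W \<in> UU" for W
  proof -
    obtain J where "J \<subseteq> carrier R" "W = qpSpec G R A M B - Cl J" using UU W unfolding TT_openin by blast
    then show ?thesis by blast
  qed
  have Jf0: "Jf W \<subseteq> carrier R \<and> qpSpec G R A M B - Cl (Jf W) = W" if W: "W \<in> UU" for W
    unfolding Jf_def by (rule someI_ex[OF ex[OF W]])
  have Jfc: "\<And>W. W \<in> UU \<Longrightarrow> Jf W \<subseteq> carrier R" and JfB: "\<And>W. W \<in> UU \<Longrightarrow> qpSpec G R A M B - Cl (Jf W) = W"
    using Jf0 by blast+
  define Y where "Y = \<Union>(Jf ` UU) \<union> ann R M"
  have Yc: "Y \<subseteq> carrier R" unfolding Y_def using Jfc ann_carrier by blast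
  define I where "I = gen_g Y"
  have Ig: "graded_ideal G R A I" unfolding I_def using gen_gideal[OF Yc] .
  have allp: "a \<in> p" if p: "p \<in> Spec_g G R A" "I \<subseteq> p" for p
  proof -
    have Yp: "Y \<subseteq> p" using p(2) gen_sub[OF Yc] unfolding I_def by blast
    then have "ann R M \<subseteq> p" unfolding Y_def by blast
    then obtain Q where Q: "Q \<in> qpSpec G R A M B" "pQ Q = p" using surj p(1) by blast
    show "a \<in> p"
    proof (rule ccontr)
      assume na: "a \<notin> p"
      then have "Q \<in> Dset a" unfolding Dset_def Cl_def using Q by auto
      then obtain W where W: "W \<in> UU" "Q \<in> W" using UU by blast
      then have "Q \<notin> Cl (Jf W)" using JfB[OF W(1)] by blast
      moreover have "Jf W \<subseteq> p" using Yp W(1) unfolding Y_def by blast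
      ultimately show False using Q unfolding Cl_def by blast
    qed
  qed
  obtain e where e: "e \<in> I" "\<And>p. p \<in> Spec_g G R A \<Longrightarrow> e \<in> p \<Longrightarrow> a \<in> p"
  proof (cases "a = \<one>")
    case True
    have "I = carrier R"
    proof (rule ccontr)
      assume "I \<noteq> carrier R"
      then obtain p where "p \<in> Spec_g G R A" "I \<subseteq> p" using exists_prime_above[OF Ig] by blast
      then show False using allp spec_one True by blast
    qed
    then have "\<one> \<in> I" by simp
    moreover have "\<And>p. p \<in> Spec_g G R A \<Longrightarrow> \<one> \<in> p \<Longrightarrow> a \<in> p" using spec_one by blast
    ultimately show ?thesis using that by blast
  next
    case False
    then have ahom: "a \<in> homog G A" using ah by blast
    have "a \<in> gr_radical G R A I" unfolding gr_char[OF Ig] using ac allp by blast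
    then obtain n where n: "a [^] (n::nat) \<in> I" using gr_homog_D[OF ahom] by blast
    moreover have "\<And>p. p \<in> Spec_g G R A \<Longrightarrow> a [^] n \<in> p \<Longrightarrow> a \<in> p" using prime_pow ahom by blast
    ultimately show ?thesis using that by blast
  qed
  obtain Y' where Y': "Y' \<subseteq> Y" "finite Y'" "e \<in> gen_g Y'"
    using gen_finite[OF Yc] e(1) unfolding I_def by blast
  define pick where "pick y = (SOME W. W \<in> UU \<and> y \<in> Jf W)" for y
  have pick: "pick y \<in> UU \<and> y \<in> Jf (pick y)" if y: "y \<in> Y' - ann R M" for y
  proof -
    have "\<exists>W. W \<in> UU \<and> y \<in> Jf W" using y Y'(1) unfolding Y_def by blast
    then show ?thesis unfolding pick_def by (rule someI_ex)
  qed
  define FF where "FF = pick ` (Y' - ann R M)"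
  have "finite FF" unfolding FF_def using Y'(2) by blast
  moreover have "FF \<subseteq> UU" unfolding FF_def using pick by blast
  moreover have "Dset a \<subseteq> \<Union>FF"
  proof
    fix Q assume QD: "Q \<in> Dset a"
    then have Q: "Q \<in> qpSpec G R A M B" and naQ: "a \<notin> pQ Q" unfolding Dset_def Cl_def by auto
    show "Q \<in> \<Union>FF"
    proof (rule ccontr)
      assume nQ: "Q \<notin> \<Union>FF"
      have "Y' \<subseteq> pQ Q"
      proof
        fix y assume y: "y \<in> Y'"
        show "y \<in> pQ Q"
        proof (cases "y \<in> ann R M")
          case True then show ?thesis using ann_sub_pQ[OF Q] by blast
        next
          case False
          then have py: "pick y \<in> UU" "y \<in> Jf (pick y)" using pick y by auto
          have "pick y \<in> FF" unfolding FF_def using y False by blast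
          then have "Q \<notin> pick y" using nQ by blast
          then have "Q \<in> Cl (Jf (pick y))" using JfB[OF py(1)] Q by blast
          then show ?thesis using py(2) unfolding Cl_def by blast
        qed
      qed
      then have "gen_g Y' \<subseteq> pQ Q" using gen_min spec_gideal[OF pQ_spec[OF Q]] by blast
      then have "e \<in> pQ Q" using Y'(3) by blast
      then show False using e(2)[OF pQ_spec[OF Q]] naQ by blast
    qed
  qed
  ultimately show "\<exists>\<F>. finite \<F> \<and> \<F> \<subseteq> UU \<and> Dset a \<subseteq> \<Union>\<F>" by blast
qed


lemma Cl_one: "Cl {\<one>} = {}"
  unfolding Cl_def using spec_one pQ_spec by blast

lemma compact_TT:
  assumes surj: "\<forall>p\<in>Spec_g G R A. ann R M \<subseteq> p \<longrightarrow> (\<exists>Q\<in>qpSpec G R A M B. pQ Q = p)"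
  shows "compact_space TT"
proof -
  have "Dset \<one> = topspace TT" unfolding Dset_def Cl_one TT_topspace by simp
  then show ?thesis unfolding compact_space_def using compact_D[OF surj one_closed] by simp
qed

lemma open_union_D:
  assumes J: "J \<subseteq> carrier R"
  shows "qpSpec G R A M B - Cl J = \<Union>(Dset ` Hc J)"
proof (rule Set.set_eqI)
  fix Q
  have h: "Q \<in> Cl J \<longleftrightarrow> (Q \<in> qpSpec G R A M B \<and> Hc J \<subseteq> pQ Q)"
    by (subst Cl_Hc[OF J]) (simp add: Cl_def)
  have h2: "Q \<in> \<Union>(Dset ` Hc J) \<longleftrightarrow> (Q \<in> qpSpec G R A M B \<and> \<not> Hc J \<subseteq> pQ Q)"
    unfolding Dset_def Cl_def by auto
  show "Q \<in> qpSpec G R A M B - Cl J \<longleftrightarrow> Q \<in> \<Union>(Dset ` Hc J)"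
    using h h2 by blast
qed

lemma D_inter:
  assumes a: "a \<in> homog G A" and b: "b \<in> homog G A"
  shows "Dset a \<inter> Dset b = Dset (a \<otimes> b)"
proof (rule Set.set_eqI)
  fix Q
  have ac: "a \<in> carrier R" and bc: "b \<in> carrier R" using a b homog_carrier by auto
  show "Q \<in> Dset a \<inter> Dset b \<longleftrightarrow> Q \<in> Dset (a \<otimes> b)"
  proof (cases "Q \<in> qpSpec G R A M B")
    case True
    interpret I: ideal "pQ Q" R using pQ_ideal[OF True] .
    have "a \<otimes> b \<in> pQ Q \<longleftrightarrow> a \<in> pQ Q \<or> b \<in> pQ Q"
      using spec_prime[OF pQ_spec[OF True] a b] I.I_r_closed I.I_l_closed ac bc by blast
    then show ?thesis unfolding Dset_def Cl_def using True by auto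
  next
    case False then show ?thesis unfolding Dset_def by auto
  qed
qed

lemma compact_open_finite:
  assumes U: "openin TT U" and cU: "compactin TT U"
  shows "\<exists>F. finite F \<and> F \<subseteq> homog G A \<and> U = \<Union>(Dset ` F)"
proof -
  obtain J where J: "J \<subseteq> carrier R" "U = qpSpec G R A M B - Cl J" using U unfolding TT_openin by blast
  have Ueq: "U = \<Union>(Dset ` Hc J)" using open_union_D[OF J(1)] J(2) by simp
  have op: "\<forall>V\<in>Dset ` Hc J. openin TT V" using D_open Hc_carrier[OF J(1)] by blast
  obtain FF where FF: "finite FF" "FF \<subseteq> Dset ` Hc J" "U \<subseteq> \<Union>FF"
    using cU op Ueq unfolding compactin_def by (metis order_refl)
  obtain F where F: "F \<subseteq> Hc J" "finite F" "FF = Dset ` F"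
    using finite_subset_image[OF FF(1) FF(2)] by blast
  have "U = \<Union>(Dset ` F)" using F FF(3) Ueq by blast
  then show ?thesis using F Hc_homog[OF J(1)] by blast
qed

lemma inter_compact:
  assumes surj: "\<forall>p\<in>Spec_g G R A. ann R M \<subseteq> p \<longrightarrow> (\<exists>Q\<in>qpSpec G R A M B. pQ Q = p)"
    and U: "openin TT U" "compactin TT U" and V: "openin TT V" "compactin TT V"
  shows "compactin TT (U \<inter> V)"
proof -
  obtain F1 where F1: "finite F1" "F1 \<subseteq> homog G A" "U = \<Union>(Dset ` F1)" using compact_open_finite U by blast
  obtain F2 where F2: "finite F2" "F2 \<subseteq> homog G A" "V = \<Union>(Dset ` F2)" using compact_open_finite V by blast
  have eq: "U \<inter> V = \<Union>((\<lambda>(a,b). Dset (a \<otimes> b)) ` (F1 \<times> F2))"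
  proof (rule Set.set_eqI)
    fix Q
    have "Q \<in> U \<inter> V \<longleftrightarrow> (\<exists>a\<in>F1. \<exists>b\<in>F2. Q \<in> Dset a \<inter> Dset b)" using F1(3) F2(3) by blast
    also have "\<dots> \<longleftrightarrow> (\<exists>a\<in>F1. \<exists>b\<in>F2. Q \<in> Dset (a \<otimes> b))" using D_inter F1(2) F2(2) by blast
    also have "\<dots> \<longleftrightarrow> Q \<in> \<Union>((\<lambda>(a,b). Dset (a \<otimes> b)) ` (F1 \<times> F2))" by blast
    finally show "Q \<in> U \<inter> V \<longleftrightarrow> Q \<in> \<Union>((\<lambda>(a,b). Dset (a \<otimes> b)) ` (F1 \<times> F2))" .
  qed
  have "compactin TT (\<Union>((\<lambda>(a,b). Dset (a \<otimes> b)) ` (F1 \<times> F2)))"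
  proof (rule compactin_Union)
    show "finite ((\<lambda>(a,b). Dset (a \<otimes> b)) ` (F1 \<times> F2))" using F1(1) F2(1) by blast
  next
    fix S assume "S \<in> (\<lambda>(a,b). Dset (a \<otimes> b)) ` (F1 \<times> F2)"
    then obtain a b where ab: "a \<in> F1" "b \<in> F2" "S = Dset (a \<otimes> b)" by blast
    have h: "a \<otimes> b \<in> homog G A" using homog_mult ab F1(2) F2(2) by blast
    show "compactin TT S" using compact_D[OF surj _ disjI2[OF h]] homog_carrier h ab(3) by blast
  qed
  then show ?thesis using eq by simp
qed

lemma basis_compact:
  assumes surj: "\<forall>p\<in>Spec_g G R A. ann R M \<subseteq> p \<longrightarrow> (\<exists>Q\<in>qpSpec G R A M B. pQ Q = p)"
    and W: "openin TT W" and x: "x \<in> W"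
  shows "\<exists>U. openin TT U \<and> compactin TT U \<and> x \<in> U \<and> U \<subseteq> W"
proof -
  obtain J where J: "J \<subseteq> carrier R" "W = qpSpec G R A M B - Cl J" using W unfolding TT_openin by blast
  then obtain a where a: "a \<in> Hc J" "x \<in> Dset a" using x open_union_D[OF J(1)] by blast
  have ah: "a \<in> homog G A" using a Hc_homog[OF J(1)] by blast
  have ac: "a \<in> carrier R" using ah homog_carrier by blast
  have "Dset a \<subseteq> W" using a J open_union_D[OF J(1)] by blast
  then show ?thesis using D_open[OF ac] compact_D[OF surj ac disjI2[OF ah]] a by blast
qed

lemma generic_point:
  assumes surj: "\<forall>p\<in>Spec_g G R A. ann R M \<subseteq> p \<longrightarrow> (\<exists>Q\<in>qpSpec G R A M B. pQ Q = p)"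
    and S: "closedin TT S" and irr: "irreducible_in TT S"
  shows "\<exists>x\<in>S. TT closure_of {x} = S"
proof -
  obtain J where J: "J \<subseteq> carrier R" "S = Cl J" using S unfolding TT_closedin by (elim exE conjE)
  have irrd: "S \<subseteq> topspace TT \<and> S \<noteq> {} \<and> (\<forall>C1 C2. closedin TT C1 \<and> closedin TT C2 \<and> S \<subseteq> C1 \<union> C2 \<longrightarrow> S \<subseteq> C1 \<or> S \<subseteq> C2)"
    using irr unfolding irreducible_in_def .
  have Sne: "S \<noteq> {}" using irrd by simp
  have irr2: "S \<subseteq> C1 \<or> S \<subseteq> C2" if "closedin TT C1" "closedin TT C2" "S \<subseteq> C1 \<union> C2" for C1 C2
    using irrd that by simp
  have SQ: "\<And>Q. Q \<in> S \<Longrightarrow> Q \<in> qpSpec G R A M B" using J(2) Cl_sub by auto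
  have Sp: "\<And>Q. Q \<in> S \<Longrightarrow> pQ Q \<in> Spec_g G R A" using SQ pQ_spec by auto
  define p0 where "p0 = \<Inter>(pQ ` S)"
  have p0m: "\<And>x. x \<in> p0 \<longleftrightarrow> (\<forall>Q\<in>S. x \<in> pQ Q)" unfolding p0_def by simp
  have gi: "graded_ideal G R A p0" unfolding p0_def
  proof (rule gideal_Inter)
    show "pQ ` S \<noteq> {}" using Sne by simp
    fix I assume "I \<in> pQ ` S"
    then obtain Q where "Q \<in> S" "I = pQ Q" by auto
    then show "graded_ideal G R A I" using spec_gideal[OF Sp] by simp
  qed
  obtain Q1 where Q1: "Q1 \<in> S" using Sne by auto
  have one: "\<one> \<notin> p0"
  proof
    assume "\<one> \<in> p0"
    then have "\<one> \<in> pQ Q1" using p0m Q1 by auto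
    then show False using spec_one[OF Sp[OF Q1]] by simp
  qed
  have prime: "a \<in> p0 \<or> b \<in> p0" if a: "a \<in> homog G A" and b: "b \<in> homog G A" and ab: "a \<otimes> b \<in> p0" for a b
  proof -
    have ac: "a \<in> carrier R" and bc: "b \<in> carrier R" using a b homog_carrier by auto
    have "S \<subseteq> Cl {a} \<union> Cl {b}"
    proof
      fix Q assume Q: "Q \<in> S"
      have "a \<otimes> b \<in> pQ Q" using ab Q p0m by auto
      then have "a \<in> pQ Q \<or> b \<in> pQ Q" using spec_prime[OF Sp[OF Q] a b] by simp
      then show "Q \<in> Cl {a} \<union> Cl {b}" unfolding Cl_def using SQ[OF Q] by auto
    qed
    moreover have "closedin TT (Cl {a})" unfolding TT_closedin using ac by auto
    moreover have "closedin TT (Cl {b})" unfolding TT_closedin using bc by auto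
    ultimately have "S \<subseteq> Cl {a} \<or> S \<subseteq> Cl {b}" using irr2 by simp
    then show ?thesis unfolding p0m Cl_def by auto
  qed
  have "p0 \<noteq> carrier R" using one by auto
  then have p0spec: "p0 \<in> Spec_g G R A"
    unfolding Spec_g_def graded_prime_ideal_def using gi prime by simp
  have annp0: "ann R M \<subseteq> p0"
  proof
    fix x assume "x \<in> ann R M"
    then show "x \<in> p0" unfolding p0m using SQ ann_sub_pQ by blast
  qed
  obtain Q0 where Q0: "Q0 \<in> qpSpec G R A M B" "pQ Q0 = p0" using surj p0spec annp0 by auto
  have "J \<subseteq> p0"
  proof
    fix x assume "x \<in> J"
    then show "x \<in> p0" unfolding p0m using J(2) unfolding Cl_def by auto
  qed
  then have Q0S: "Q0 \<in> S" unfolding J(2) Cl_def using Q0 by auto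
  have "TT closure_of {Q0} = S"
  proof
    show "TT closure_of {Q0} \<subseteq> S" by (rule closure_of_minimal) (use Q0S S in auto)
  next
    obtain J' where J': "J' \<subseteq> carrier R" "TT closure_of {Q0} = Cl J'"
      using closedin_closure_of[of TT "{Q0}"] unfolding TT_closedin by (elim exE conjE)
    have "{Q0} \<subseteq> topspace TT" using Q0 TT_topspace by auto
    then have "{Q0} \<subseteq> TT closure_of {Q0}" by (rule closure_of_subset)
    then have "Q0 \<in> TT closure_of {Q0}" by simp
    then have J'p0: "J' \<subseteq> p0" using J' Q0 unfolding Cl_def by auto
    show "S \<subseteq> TT closure_of {Q0}"
    proof
      fix Q assume Q: "Q \<in> S"
      have "J' \<subseteq> pQ Q" using J'p0 Q p0m by auto
      then show "Q \<in> TT closure_of {Q0}" unfolding J'(2) Cl_def using SQ[OF Q] by auto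
    qed
  qed
  then show ?thesis using Q0S by auto
qed

lemma spectral_TT:
  assumes surj: "\<forall>p\<in>Spec_g G R A. ann R M \<subseteq> p \<longrightarrow> (\<exists>Q\<in>qpSpec G R A M B. pQ Q = p)"
    and t0: "t0_space TT"
  shows "spectral_space TT"
  unfolding spectral_space_def
proof (intro conjI allI impI)
  show "t0_space TT" by (rule t0)
  show "compact_space TT" by (rule compact_TT[OF surj])
  fix U V assume "openin TT U \<and> compactin TT U \<and> openin TT V \<and> compactin TT V"
  then show "compactin TT (U \<inter> V)" using inter_compact[OF surj] by simp
next
  fix W x assume "openin TT W \<and> x \<in> W"
  then show "\<exists>U. openin TT U \<and> compactin TT U \<and> x \<in> U \<and> U \<subseteq> W" using basis_compact[OF surj] by simp
next
  fix S assume "closedin TT S \<and> irreducible_in TT S"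
  then show "\<exists>x\<in>S. TT closure_of {x} = S" using generic_point[OF surj] by simp
qed

end



lemma gdecomp_intro_gen:
  fixes S (structure)
  assumes am: "abelian_monoid S" and As: "\<And>g. g \<in> carrier G \<Longrightarrow> A g \<subseteq> carrier S"
    and c: "c \<in> extensional (carrier G)" "\<And>g. g \<in> carrier G \<Longrightarrow> c g \<in> A g"
    "finite F" "F \<subseteq> carrier G" "\<And>g. g \<in> carrier G \<Longrightarrow> g \<notin> F \<Longrightarrow> c g = \<zero>"
    "x = (\<Oplus>g\<in>F. c g)"
  shows "gdecomp G S A x c"
proof -
  interpret abelian_monoid S by (rule am)
  let ?S = "{g \<in> carrier G. c g \<noteq> \<zero>}"
  have sub: "?S \<subseteq> F" using c(5) by blast
  have fin: "finite ?S" using sub c(3) finite_subset by blast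
  have "(\<Oplus>g\<in>F. c g) = (\<Oplus>g\<in>?S. c g)"
    apply (rule add.finprod_mono_neutral_cong_right)
    using c As sub by (auto simp: Pi_def) blast
  then show ?thesis unfolding gdecomp_def using c fin by auto
qed

context dsd begin

lemma gcomp_add:
  assumes x: "x \<in> carrier S" and y: "y \<in> carrier S" and g: "g \<in> carrier G"
  shows "gcomp G S A (x \<oplus> y) g = gcomp G S A x g \<oplus> gcomp G S A y g"
proof -
  let ?F = "{g \<in> carrier G. gcomp G S A x g \<noteq> \<zero>} \<union> {g \<in> carrier G. gcomp G S A y g \<noteq> \<zero>}"
  let ?c = "restrict (\<lambda>g. gcomp G S A x g \<oplus> gcomp G S A y g) (carrier G)"
  have fin: "finite ?F" using supp_finite x y by auto
  have "gdecomp G S A (x \<oplus> y) ?c"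
  proof (rule gdecomp_intro[where F="?F"])
    show "?c \<in> extensional (carrier G)" by simp
    show "finite ?F" by (rule fin)
    show "?F \<subseteq> carrier G" by auto
    show "\<And>g. g \<in> carrier G \<Longrightarrow> ?c g \<in> A g" using A_add gcomp_in x y by simp
    show "\<And>g. g \<in> carrier G \<Longrightarrow> g \<notin> ?F \<Longrightarrow> ?c g = \<zero>" by auto
  next
    have "x = (\<Oplus>g\<in>?F. gcomp G S A x g)" by (rule sum_comp_F[OF x fin]) auto
    moreover have "y = (\<Oplus>g\<in>?F. gcomp G S A y g)" by (rule sum_comp_F[OF y fin]) auto
    ultimately have "x \<oplus> y = (\<Oplus>g\<in>?F. gcomp G S A x g) \<oplus> (\<Oplus>g\<in>?F. gcomp G S A y g)" by simp
    also have "\<dots> = (\<Oplus>g\<in>?F. gcomp G S A x g \<oplus> gcomp G S A y g)"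
      by (rule finsum_addf[symmetric]) (use gcomp_carrier x y in auto)
    also have "\<dots> = (\<Oplus>g\<in>?F. ?c g)"
      by (rule finsum_cong') (use gcomp_carrier x y in auto)
    finally show "x \<oplus> y = (\<Oplus>g\<in>?F. ?c g)" .
  qed
  then have "gcomp G S A (x \<oplus> y) = ?c" by (rule decomp_unique)
  then show ?thesis using g by simp
qed

lemma gcomp_neg:
  assumes x: "x \<in> carrier S" and g: "g \<in> carrier G"
  shows "gcomp G S A (\<ominus> x) g = \<ominus> gcomp G S A x g"
proof -
  have "gcomp G S A x g \<oplus> gcomp G S A (\<ominus> x) g = gcomp G S A (x \<oplus> \<ominus> x) g"
    using gcomp_add[OF x _ g] x by simp
  also have "\<dots> = \<zero>" using x g gcomp_zero by (simp add: r_neg)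
  finally have "gcomp G S A x g \<oplus> gcomp G S A (\<ominus> x) g = \<zero>" .
  then have "gcomp G S A (\<ominus> x) g \<oplus> gcomp G S A x g = \<zero>"
    using gcomp_carrier x g a_comm by simp
  then show ?thesis using minus_equality gcomp_carrier x g by simp
qed

end

context grring begin

lemma add_neg_cancel: "x \<in> carrier R \<Longrightarrow> y \<in> carrier R \<Longrightarrow> y \<oplus> (\<ominus> y \<oplus> x) = x"
  by (simp add: a_assoc[symmetric] r_neg)

lemma neg_add_self: "y \<in> carrier R \<Longrightarrow> \<ominus> y \<oplus> y = \<zero>"
  by (simp add: l_neg)

lemma finsum_closed_R: "f \<in> F \<rightarrow> carrier R \<Longrightarrow> (\<Oplus>i\<in>F. f i) \<in> carrier R"
  by (rule finsum_closed)

end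

context grmod begin

lemma zero_submodule: "submodule {\<zero>\<^bsub>M\<^esub>} R M"
  by (rule submoduleI) auto

lemma zero_gsub: "graded_submodule G R M B {\<zero>\<^bsub>M\<^esub>}"
  unfolding graded_submodule_def using zero_submodule DM.gcomp_zero by auto

lemma N_ideal: "ideal (ann R M) R"
  unfolding ann_def by (rule colon_ideal[OF zero_submodule])

lemma N_graded: "graded_ideal G R A (ann R M)"
  unfolding ann_def by (rule colon_graded[OF zero_gsub])

end

sublocale grmod \<subseteq> NI: ideal "ann R M" R by (rule N_ideal)

context grmod begin

abbreviation Rb where "Rb \<equiv> Rbar R M"
abbreviation pi where "pi \<equiv> a_r_coset R (ann R M)"

lemma Rb_cring: "cring Rb"
  unfolding Rbar_def by (rule NI.quotient_is_cring[OF is_cring])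

lemma pi_hom: "ring_hom_cring R Rb pi"
  unfolding Rbar_def by (rule NI.rcos_ring_hom_cring[OF is_cring])

lemma carrier_Rb: "carrier Rb = pi ` carrier R"
  unfolding Rbar_def FactRing_def A_RCOSETS_def' by auto

lemma zero_Rb: "\<zero>\<^bsub>Rb\<^esub> = ann R M"
  unfolding Rbar_def FactRing_def by simp

lemma pi_carrier: "x \<in> carrier R \<Longrightarrow> pi x \<in> carrier Rb"
  using carrier_Rb by auto

lemma pi_add: "x \<in> carrier R \<Longrightarrow> y \<in> carrier R \<Longrightarrow> pi (x \<oplus> y) = pi x \<oplus>\<^bsub>Rb\<^esub> pi y"
proof -
  interpret H: ring_hom_cring R Rb pi by (rule pi_hom)
  show "x \<in> carrier R \<Longrightarrow> y \<in> carrier R \<Longrightarrow> pi (x \<oplus> y) = pi x \<oplus>\<^bsub>Rb\<^esub> pi y" by (rule H.hom_add)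
qed

lemma pi_mult: "x \<in> carrier R \<Longrightarrow> y \<in> carrier R \<Longrightarrow> pi (x \<otimes> y) = pi x \<otimes>\<^bsub>Rb\<^esub> pi y"
proof -
  interpret H: ring_hom_cring R Rb pi by (rule pi_hom)
  show "x \<in> carrier R \<Longrightarrow> y \<in> carrier R \<Longrightarrow> pi (x \<otimes> y) = pi x \<otimes>\<^bsub>Rb\<^esub> pi y" by (rule H.hom_mult)
qed

lemma pi_one: "pi \<one> = \<one>\<^bsub>Rb\<^esub>"
proof -
  interpret H: ring_hom_cring R Rb pi by (rule pi_hom)
  show ?thesis by (rule H.hom_one)
qed

lemma pi_N: "x \<in> ann R M \<Longrightarrow> pi x = \<zero>\<^bsub>Rb\<^esub>"
  unfolding zero_Rb using NI.a_rcos_const by simp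

lemma pi_zero: "pi \<zero> = \<zero>\<^bsub>Rb\<^esub>"
  using pi_N NI.zero_closed by simp

lemma pi_finsum: "finite F \<Longrightarrow> f \<in> F \<rightarrow> carrier R \<Longrightarrow> pi (\<Oplus>i\<in>F. f i) = (\<Oplus>\<^bsub>Rb\<^esub>i\<in>F. pi (f i))"
proof -
  interpret H: ring_hom_cring R Rb pi by (rule pi_hom)
  show "finite F \<Longrightarrow> f \<in> F \<rightarrow> carrier R \<Longrightarrow> pi (\<Oplus>i\<in>F. f i) = (\<Oplus>\<^bsub>Rb\<^esub>i\<in>F. pi (f i))"
    using H.hom_finsum by (simp add: comp_def)
qed

lemma pi_mem:
  assumes I: "ideal I R" and NI: "ann R M \<subseteq> I" and x: "x \<in> carrier R"
  shows "pi x \<in> pi ` I \<longleftrightarrow> x \<in> I"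
proof -
  have Ieq: "\<Union>(pi ` I) = I" by (rule iffD1[OF ideal_incl_iff[OF N_ideal I] NI, symmetric])
  have sub: "pi ` I \<subseteq> carrier (R Quot ann R M)"
    using pi_carrier ideal_sub[OF I] unfolding Rbar_def by auto
  show ?thesis using canonical_proj_vimage_mem_iff[OF N_ideal sub x] Ieq by simp
qed

lemma pi_img_inj:
  assumes I: "ideal I R" "ann R M \<subseteq> I" and J: "ideal J R" "ann R M \<subseteq> J" and eq: "pi ` I = pi ` J"
  shows "I = J"
proof -
  have "\<Union>(pi ` I) = I" by (rule iffD1[OF ideal_incl_iff[OF N_ideal I(1)] I(2), symmetric])
  moreover have "\<Union>(pi ` J) = J" by (rule iffD1[OF ideal_incl_iff[OF N_ideal J(1)] J(2), symmetric])
  ultimately show ?thesis using eq by metis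
qed


lemma Abar_eq: "Abar R M A g = pi ` A g"
  unfolding Abar_def by simp

lemma Abar_sub: "g \<in> carrier G \<Longrightarrow> Abar R M A g \<subseteq> carrier Rb"
  unfolding Abar_eq using D.A_sub pi_carrier by blast

definition c0 :: "'a \<Rightarrow> 'g \<Rightarrow> 'a set" where
  "c0 x = restrict (\<lambda>g. pi (gcomp G R A x g)) (carrier G)"

lemma Rb_am: "abelian_monoid Rb"
  using Rb_cring cring.axioms(1) ring.is_abelian_group abelian_group.axioms(1) by blast

lemma decomp_Rb_ex:
  assumes x: "x \<in> carrier R"
  shows "gdecomp G Rb (Abar R M A) (pi x) (c0 x)"
proof (rule gdecomp_intro_gen[OF Rb_am Abar_sub])
  let ?F = "{g \<in> carrier G. gcomp G R A x g \<noteq> \<zero>}"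
  show "c0 x \<in> extensional (carrier G)" unfolding c0_def by simp
  show "\<And>g. g \<in> carrier G \<Longrightarrow> c0 x g \<in> Abar R M A g"
    unfolding c0_def Abar_eq using D.gcomp_in[OF x] by auto
  show "finite ?F" using D.supp_finite[OF x] .
  show "?F \<subseteq> carrier G" by auto
  show "\<And>g. g \<in> carrier G \<Longrightarrow> g \<notin> ?F \<Longrightarrow> c0 x g = \<zero>\<^bsub>Rb\<^esub>"
    unfolding c0_def using pi_zero by auto
  have "pi x = pi (\<Oplus>g\<in>?F. gcomp G R A x g)" using D.sum_comp[OF x] by simp
  also have "\<dots> = (\<Oplus>\<^bsub>Rb\<^esub>g\<in>?F. pi (gcomp G R A x g))"
    by (rule pi_finsum) (use D.supp_finite[OF x] D.gcomp_carrier[OF x] in auto)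
  also have "\<dots> = (\<Oplus>\<^bsub>Rb\<^esub>g\<in>?F. c0 x g)"
  proof -
    interpret Rbc: cring Rb by (rule Rb_cring)
    show ?thesis
      by (rule Rbc.finsum_cong') (use D.gcomp_carrier[OF x] pi_carrier in \<open>auto simp: c0_def\<close>)
  qed
  finally show "pi x = (\<Oplus>\<^bsub>Rb\<^esub>g\<in>?F. c0 x g)" .
qed

lemma decomp_Rb_unique:
  assumes x: "x \<in> carrier R" and c: "gdecomp G Rb (Abar R M A) (pi x) c"
  shows "c = c0 x"
proof -
  interpret Rbc: cring Rb by (rule Rb_cring)
  let ?F = "{g \<in> carrier G. c g \<noteq> \<zero>\<^bsub>Rb\<^esub>}"
  have cext: "c \<in> extensional (carrier G)" and cA: "\<And>g. g \<in> carrier G \<Longrightarrow> c g \<in> Abar R M A g"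
    and fin: "finite ?F" and sx: "pi x = (\<Oplus>\<^bsub>Rb\<^esub>g\<in>?F. c g)"
    using c unfolding gdecomp_def by auto
  have exa: "\<exists>a. a \<in> A g \<and> c g = pi a" if g: "g \<in> carrier G" for g
    using cA[OF g] unfolding Abar_eq by blast
  define a where "a = restrict (\<lambda>g. if c g = \<zero>\<^bsub>Rb\<^esub> then \<zero> else (SOME a. a \<in> A g \<and> c g = pi a)) (carrier G)"
  have aA: "a g \<in> A g" and pia: "pi (a g) = c g" if g: "g \<in> carrier G" for g
  proof -
    have "a g \<in> A g \<and> pi (a g) = c g"
    proof (cases "c g = \<zero>\<^bsub>Rb\<^esub>")
      case True then show ?thesis unfolding a_def using g D.A_zero pi_zero by simp
    next
      case False
      have "(SOME a. a \<in> A g \<and> c g = pi a) \<in> A g \<and> c g = pi (SOME a. a \<in> A g \<and> c g = pi a)"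
        by (rule someI_ex[OF exa[OF g]])
      then show ?thesis unfolding a_def using g False by simp
    qed
    then show "a g \<in> A g" "pi (a g) = c g" by auto
  qed
  have ac: "a g \<in> carrier R" if "g \<in> carrier G" for g using aA[OF that] D.A_sub[OF that] by blast
  have a0: "a g = \<zero>" if "g \<in> carrier G" "g \<notin> ?F" for g unfolding a_def using that by simp
  define y where "y = (\<Oplus>g\<in>?F. a g)"
  have yc: "y \<in> carrier R" unfolding y_def by (rule finsum_closed_R) (use ac in auto)
  have dy: "gdecomp G R A y a"
    by (rule D.gdecomp_intro[where F="?F"]) (use aA a0 fin y_def a_def in auto)
  have gy: "gcomp G R A y = a" by (rule D.decomp_unique[OF dy])
  have "pi y = (\<Oplus>\<^bsub>Rb\<^esub>g\<in>?F. pi (a g))" unfolding y_def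
    by (rule pi_finsum[OF fin]) (use ac in auto)
  also have "\<dots> = (\<Oplus>\<^bsub>Rb\<^esub>g\<in>?F. c g)"
  proof -
    have cc: "\<And>g. g \<in> carrier G \<Longrightarrow> c g \<in> carrier Rb" using cA Abar_sub by blast
    show ?thesis by (rule Rbc.finsum_cong') (use pia cc in auto)
  qed
  finally have pxy: "pi x = pi y" using sx by simp
  define z where "z = \<ominus> y \<oplus> x"
  have nyc: "\<ominus> y \<in> carrier R" using yc by simp
  have zc: "z \<in> carrier R" unfolding z_def using x nyc by simp
  have xyz: "x = y \<oplus> z" unfolding z_def using add_neg_cancel[OF x yc] by simp
  have "pi z = pi (\<ominus> y) \<oplus>\<^bsub>Rb\<^esub> pi x" unfolding z_def by (rule pi_add[OF nyc x])
  also have "\<dots> = pi (\<ominus> y) \<oplus>\<^bsub>Rb\<^esub> pi y" using pxy by simp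
  also have "\<dots> = pi (\<ominus> y \<oplus> y)" by (rule pi_add[OF nyc yc, symmetric])
  also have "\<dots> = pi \<zero>" using neg_add_self[OF yc] by simp
  also have "\<dots> = \<zero>\<^bsub>Rb\<^esub>" by (rule pi_zero)
  finally have pz: "pi z = \<zero>\<^bsub>Rb\<^esub>" .
  have zN: "z \<in> ann R M"
  proof -
    have "pi \<zero> \<in> pi ` ann R M" using NI.zero_closed by blast
    then have "pi z \<in> pi ` ann R M" using pz pi_zero by simp
    then show ?thesis using pi_mem[OF N_ideal subset_refl zc] by simp
  qed
  show ?thesis
  proof (rule extensionalityI[OF cext])
    show "c0 x \<in> extensional (carrier G)" unfolding c0_def by simp
    fix g assume g: "g \<in> carrier G"
    have zg: "gcomp G R A z g \<in> carrier R" by (rule D.gcomp_carrier[OF zc g])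
    have "gcomp G R A x g = gcomp G R A y g \<oplus> gcomp G R A z g"
      using xyz D.gcomp_add[OF yc zc g] by simp
    then have "gcomp G R A x g = a g \<oplus> gcomp G R A z g" using gy by simp
    then have "pi (gcomp G R A x g) = pi (a g) \<oplus>\<^bsub>Rb\<^esub> pi (gcomp G R A z g)"
      using pi_add[OF ac[OF g] zg] by simp
    also have "pi (gcomp G R A z g) = \<zero>\<^bsub>Rb\<^esub>"
      by (rule pi_N[OF gideal_comp[OF N_graded zN g]])
    also have "pi (a g) = c g" by (rule pia[OF g])
    also have "c g \<oplus>\<^bsub>Rb\<^esub> \<zero>\<^bsub>Rb\<^esub> = c g"
    proof -
      have "c g \<in> carrier Rb" using cA[OF g] Abar_sub[OF g] by blast
      then show ?thesis by (rule Rbc.r_zero)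
    qed
    finally have "pi (gcomp G R A x g) = c g" .
    then show "c g = c0 x g" unfolding c0_def using g by simp
  qed
qed

lemma Rb_graded: "graded_ring G Rb (Abar R M A)"
  unfolding graded_ring_def
proof (intro conjI)
  show "group G" by (rule G.is_group)
  show "cring Rb" by (rule Rb_cring)
  show "direct_sum_decomp G Rb (Abar R M A)"
    unfolding direct_sum_decomp_def
  proof (intro conjI ballI)
    fix g assume g: "g \<in> carrier G"
    show "subgroup (Abar R M A g) (add_monoid Rb)"
      unfolding Abar_eq Rbar_def by (rule ring_hom_ring.img_is_add_subgroup[OF NI.rcos_ring_hom_ring D.A_subgroup[OF g]])
  next
    fix Xb assume Xb: "Xb \<in> carrier Rb"
    then obtain x where x: "x \<in> carrier R" "Xb = pi x" using carrier_Rb by auto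
    show "\<exists>!c. gdecomp G Rb (Abar R M A) Xb c"
      using decomp_Rb_ex[OF x(1)] decomp_Rb_unique[OF x(1)] x(2) by blast
  qed
  show "\<forall>g\<in>carrier G. \<forall>h\<in>carrier G. \<forall>a\<in>Abar R M A g. \<forall>b\<in>Abar R M A h. a \<otimes>\<^bsub>Rb\<^esub> b \<in> Abar R M A (g \<otimes>\<^bsub>G\<^esub> h)"
  proof (intro ballI)
    fix g h a b assume g: "g \<in> carrier G" and h: "h \<in> carrier G" and a: "a \<in> Abar R M A g" and b: "b \<in> Abar R M A h"
    obtain a' b' where ab: "a' \<in> A g" "a = pi a'" "b' \<in> A h" "b = pi b'" using a b unfolding Abar_eq by auto
    have "a \<otimes>\<^bsub>Rb\<^esub> b = pi (a' \<otimes> b')" using ab pi_mult D.A_sub g h by auto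
    then show "a \<otimes>\<^bsub>Rb\<^esub> b \<in> Abar R M A (g \<otimes>\<^bsub>G\<^esub> h)" unfolding Abar_eq using mult_A[OF g h ab(1) ab(3)] by auto
  qed
qed


end

context grring begin

lemma spec_qp: "p \<in> Spec_g G R A \<Longrightarrow> p \<in> qpSpec_ring G R A"
  unfolding qpSpec_ring_def graded_qp_ideal_def
proof (intro CollectI conjI ballI impI)
  assume p: "p \<in> Spec_g G R A"
  show "graded_ideal G R A p" using spec_gideal[OF p] .
  show "p \<noteq> carrier R" using spec_proper[OF p] .
  fix a b assume a: "a \<in> homog G A" and b: "b \<in> homog G A" and ab: "a \<otimes> b \<in> p"
  then have "a \<in> p \<or> b \<in> p" using spec_prime[OF p] by blast
  then show "a \<in> gr_radical G R A p \<or> b \<in> gr_radical G R A p" using gr_spec[OF p] by simp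
qed

abbreviation Vz :: "'a set \<Rightarrow> 'a set set" where
  "Vz I \<equiv> {p \<in> Spec_g G R A. I \<subseteq> p}"

definition Zcl :: "'a set \<Rightarrow> 'a set" where
  "Zcl Y = \<Inter>(insert (carrier R) (Vz Y))"

lemma Zcl_gideal: "graded_ideal G R A (Zcl Y)"
  unfolding Zcl_def by (rule gideal_Inter) (auto intro: gideal_carrier spec_gideal)

lemma Zcl_sub: "p \<in> Spec_g G R A \<Longrightarrow> Y \<subseteq> carrier R \<Longrightarrow> Zcl Y \<subseteq> p \<longleftrightarrow> Y \<subseteq> p"
  unfolding Zcl_def by auto

lemma V_Int:
  assumes I: "graded_ideal G R A I" and J: "graded_ideal G R A J"
  shows "Vz (I \<inter> J) = Vz I \<union> Vz J"
proof (rule Set.set_eqI)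
  fix p
  show "p \<in> Vz (I \<inter> J) \<longleftrightarrow> p \<in> Vz I \<union> Vz J"
  proof
    assume "p \<in> Vz I \<union> Vz J" then show "p \<in> Vz (I \<inter> J)" by auto
  next
    assume pV: "p \<in> Vz (I \<inter> J)"
    then have p: "p \<in> Spec_g G R A" and IJ: "I \<inter> J \<subseteq> p" by auto
    have hom_out: "\<exists>a. a \<in> K \<and> a \<in> homog G A \<and> a \<notin> p" if K: "graded_ideal G R A K" "\<not> K \<subseteq> p" for K
    proof -
      obtain x where x: "x \<in> K" "x \<notin> p" using K(2) by auto
      have xc: "x \<in> carrier R" using ideal_sub[OF gideal_ideal[OF K(1)]] x(1) by auto
      have "\<exists>g\<in>carrier G. gcomp G R A x g \<notin> p"
      proof (rule ccontr)
        assume "\<not> (\<exists>g\<in>carrier G. gcomp G R A x g \<notin> p)"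
        then have "x \<in> p" using ideal_by_comps[OF gideal_ideal[OF spec_gideal[OF p]] xc] by auto
        then show False using x(2) by simp
      qed
      then obtain g where g: "g \<in> carrier G" "gcomp G R A x g \<notin> p" by auto
      have "gcomp G R A x g \<in> K" using gideal_comp[OF K(1) x(1) g(1)] .
      moreover have "gcomp G R A x g \<in> homog G A" using homogI[OF g(1) D.gcomp_in[OF xc g(1)]] .
      ultimately show ?thesis using g(2) by blast
    qed
    show "p \<in> Vz I \<union> Vz J"
    proof (rule ccontr)
      assume "p \<notin> Vz I \<union> Vz J"
      then have "\<not> I \<subseteq> p" "\<not> J \<subseteq> p" using p by auto
      then obtain a b where a: "a \<in> I" "a \<in> homog G A" "a \<notin> p" and b: "b \<in> J" "b \<in> homog G A" "b \<notin> p"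
        using hom_out I J by meson
      have ac: "a \<in> carrier R" and bc: "b \<in> carrier R" using a(2) b(2) homog_carrier by auto
      have "a \<otimes> b \<in> I" using ideal.I_r_closed[OF gideal_ideal[OF I] a(1) bc] .
      moreover have "a \<otimes> b \<in> J" using ideal.I_l_closed[OF gideal_ideal[OF J] b(1) ac] .
      ultimately have "a \<otimes> b \<in> p" using IJ by auto
      then show False using spec_prime[OF p a(2) b(2)] a(3) b(3) by blast
    qed
  qed
qed

lemma zar_istopology: "istopology (\<lambda>U. \<exists>I. graded_ideal G R A I \<and> U = Spec_g G R A - Vz I)"
  unfolding istopology_def
proof (intro conjI allI impI)
  fix S T assume "\<exists>I. graded_ideal G R A I \<and> S = Spec_g G R A - Vz I"
    "\<exists>I. graded_ideal G R A I \<and> T = Spec_g G R A - Vz I"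
  then obtain I J where IJ: "graded_ideal G R A I" "S = Spec_g G R A - Vz I"
    "graded_ideal G R A J" "T = Spec_g G R A - Vz J" by (elim exE conjE)
  have "graded_ideal G R A (\<Inter>{I, J})" by (rule gideal_Inter) (use IJ(1,3) in auto)
  then have g: "graded_ideal G R A (I \<inter> J)" by simp
  have "S \<inter> T = Spec_g G R A - (Vz I \<union> Vz J)" unfolding IJ(2,4) by blast
  also have "\<dots> = Spec_g G R A - Vz (I \<inter> J)" using V_Int[OF IJ(1,3)] by simp
  finally have eq: "S \<inter> T = Spec_g G R A - Vz (I \<inter> J)" .
  show "\<exists>I. graded_ideal G R A I \<and> S \<inter> T = Spec_g G R A - Vz I" using g eq by blast
next
  fix KK assume KK: "\<forall>K\<in>KK. \<exists>I. graded_ideal G R A I \<and> K = Spec_g G R A - Vz I"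
  define If where "If K = (SOME I. graded_ideal G R A I \<and> Spec_g G R A - Vz I = K)" for K
  have ex: "\<exists>I. graded_ideal G R A I \<and> Spec_g G R A - Vz I = K" if K: "K \<in> KK" for K
  proof -
    obtain I where I: "graded_ideal G R A I" "K = Spec_g G R A - Vz I" using bspec[OF KK K] by (elim exE conjE)
    show ?thesis
    proof (intro exI conjI)
      show "graded_ideal G R A I" by (rule I(1))
      show "Spec_g G R A - Vz I = K" by (rule I(2)[symmetric])
    qed
  qed
  have If0: "graded_ideal G R A (If K) \<and> Spec_g G R A - Vz (If K) = K" if K: "K \<in> KK" for K
    unfolding If_def by (rule someI_ex[OF ex[OF K]])
  have Ifg: "\<And>K. K \<in> KK \<Longrightarrow> graded_ideal G R A (If K)" and IfK: "\<And>K. K \<in> KK \<Longrightarrow> Spec_g G R A - Vz (If K) = K"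
    using If0 by blast+
  define Y where "Y = \<Union>(If ` KK)"
  have Yc: "Y \<subseteq> carrier R"
  proof
    fix y assume "y \<in> Y"
    then obtain K where K: "K \<in> KK" "y \<in> If K" unfolding Y_def by blast
    then show "y \<in> carrier R" using ideal_sub[OF gideal_ideal[OF Ifg[OF K(1)]]] by blast
  qed
  have UK: "(\<Union>K\<in>KK. Spec_g G R A - Vz (If K)) = \<Union>KK"
  proof -
    have "(\<Union>K\<in>KK. Spec_g G R A - Vz (If K)) = (\<Union>K\<in>KK. K)"
      by (rule SUP_cong) (simp_all add: IfK)
    then show ?thesis by simp
  qed
  have "\<Union>KK = Spec_g G R A - Vz (Zcl Y)"
  proof (rule Set.set_eqI)
    fix p
    have "p \<in> \<Union>KK \<longleftrightarrow> (\<exists>K\<in>KK. p \<in> Spec_g G R A - Vz (If K))" unfolding UK[symmetric] by blast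
    also have "\<dots> \<longleftrightarrow> p \<in> Spec_g G R A \<and> \<not> Y \<subseteq> p" unfolding Y_def by blast
    also have "\<dots> \<longleftrightarrow> p \<in> Spec_g G R A - Vz (Zcl Y)"
    proof (cases "p \<in> Spec_g G R A")
      case True then show ?thesis using Zcl_sub[OF True Yc] by simp
    next
      case False then show ?thesis by simp
    qed
    finally show "p \<in> \<Union>KK \<longleftrightarrow> p \<in> Spec_g G R A - Vz (Zcl Y)" .
  qed
  then show "\<exists>I. graded_ideal G R A I \<and> \<Union>KK = Spec_g G R A - Vz I"
    using Zcl_gideal[of Y] by (intro exI conjI)
qed

lemma zar_openin: "openin (zariski_g G R A) U \<longleftrightarrow> (\<exists>I. graded_ideal G R A I \<and> U = Spec_g G R A - Vz I)"
  unfolding zariski_g_def using zar_istopology by simp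

lemma zar_topspace: "topspace (zariski_g G R A) = Spec_g G R A"
proof -
  have "Vz (carrier R) = {}" using spec_proper spec_gideal gideal_ideal ideal_sub by blast
  then have "openin (zariski_g G R A) (Spec_g G R A)" unfolding zar_openin using gideal_carrier by blast
  moreover have "\<And>U. openin (zariski_g G R A) U \<Longrightarrow> U \<subseteq> Spec_g G R A" unfolding zar_openin by auto
  ultimately show ?thesis unfolding topspace_def by blast
qed


end

sublocale grmod \<subseteq> RB: grring G "Rbar R M" "Abar R M A" by (rule grring.intro, rule Rb_graded)

context grmod begin

lemma gcomp_Rb: "x \<in> carrier R \<Longrightarrow> g \<in> carrier G \<Longrightarrow> gcomp G Rb (Abar R M A) (pi x) g = pi (gcomp G R A x g)"
  using RB.D.decomp_unique[OF decomp_Rb_ex] unfolding c0_def by simp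

lemma homog_Rb: "homog G (Abar R M A) = pi ` homog G A"
  unfolding homog_def Abar_eq by blast

lemma spec_to_Rb:
  assumes p: "p \<in> Spec_g G R A" and Np: "ann R M \<subseteq> p"
  shows "pi ` p \<in> Spec_g G Rb (Abar R M A)"
proof -
  have pid: "ideal p R" using gideal_ideal[OF spec_gideal[OF p]] .
  have pc: "p \<subseteq> carrier R" using ideal_sub[OF pid] .
  have mem: "\<And>x. x \<in> carrier R \<Longrightarrow> pi x \<in> pi ` p \<longleftrightarrow> x \<in> p" using pi_mem[OF pid Np] by simp
  have "ideal (pi ` p) Rb" unfolding Rbar_def by (rule ring_ideal_imp_quot_ideal[OF N_ideal pid])
  moreover have "gcomp G Rb (Abar R M A) Xc g \<in> pi ` p" if Xc: "Xc \<in> pi ` p" and g: "g \<in> carrier G" for Xc g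
  proof -
    obtain x where x: "x \<in> p" "Xc = pi x" using Xc by blast
    have xc: "x \<in> carrier R" using x(1) pc by blast
    have "gcomp G Rb (Abar R M A) Xc g = pi (gcomp G R A x g)" using gcomp_Rb[OF xc g] x(2) by simp
    moreover have "gcomp G R A x g \<in> p" using gideal_comp[OF spec_gideal[OF p] x(1) g] .
    ultimately show ?thesis by simp
  qed
  moreover have "pi ` p \<noteq> carrier Rb"
  proof
    assume eq: "pi ` p = carrier Rb"
    have "pi \<one> \<in> carrier Rb" using pi_carrier by simp
    then have "pi \<one> \<in> pi ` p" using eq by simp
    then have "\<one> \<in> p" using mem by simp
    then show False using spec_one[OF p] by simp
  qed
  moreover have "Xa \<in> pi ` p \<or> Xb \<in> pi ` p"
    if Xa: "Xa \<in> homog G (Abar R M A)" and Xb: "Xb \<in> homog G (Abar R M A)" and ab: "Xa \<otimes>\<^bsub>Rb\<^esub> Xb \<in> pi ` p" for Xa Xb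
  proof -
    obtain a where a: "a \<in> homog G A" "Xa = pi a" using Xa homog_Rb by auto
    obtain b where b: "b \<in> homog G A" "Xb = pi b" using Xb homog_Rb by auto
    have ac: "a \<in> carrier R" and bc: "b \<in> carrier R" using a b homog_carrier by auto
    have "pi (a \<otimes> b) \<in> pi ` p" using ab a b pi_mult[OF ac bc] by simp
    then have "a \<otimes> b \<in> p" using mem ac bc by simp
    then have "a \<in> p \<or> b \<in> p" using spec_prime[OF p a(1) b(1)] by simp
    then show ?thesis using a b by blast
  qed
  ultimately show ?thesis unfolding Spec_g_def graded_prime_ideal_def graded_ideal_def by blast
qed

lemma spec_from_Rb:
  assumes P: "P \<in> Spec_g G Rb (Abar R M A)"
  shows "\<exists>p\<in>Spec_g G R A. ann R M \<subseteq> p \<and> pi ` p = P"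
proof -
  define p where "p = {r \<in> carrier R. pi r \<in> P}"
  have Pg: "graded_ideal G Rb (Abar R M A) P" using RB.spec_gideal[OF P] .
  have Pid: "ideal P Rb" using RB.gideal_ideal[OF Pg] .
  have Pc: "P \<subseteq> carrier Rb" using RB.ideal_sub[OF Pid] .
  have pid: "ideal p R" unfolding p_def
    using ring_hom_ring.ideal_vimage[OF NI.rcos_ring_hom_ring] Pid unfolding Rbar_def by blast
  have Np: "ann R M \<subseteq> p"
  proof
    fix r assume r: "r \<in> ann R M"
    have "pi r = \<zero>\<^bsub>Rb\<^esub>" using pi_N[OF r] .
    moreover have "\<zero>\<^bsub>Rb\<^esub> \<in> P" using ideal.axioms(1)[OF Pid] additive_subgroup.zero_closed by blast
    ultimately show "r \<in> p" unfolding p_def using r ann_carrier by auto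
  qed
  have img: "pi ` p = P"
  proof
    show "pi ` p \<subseteq> P" unfolding p_def by blast
    show "P \<subseteq> pi ` p"
    proof
      fix Xa assume Xa: "Xa \<in> P"
      then obtain x where x: "x \<in> carrier R" "Xa = pi x" using Pc carrier_Rb by blast
      then show "Xa \<in> pi ` p" unfolding p_def using Xa by blast
    qed
  qed
  have graded: "gcomp G R A x g \<in> p" if x: "x \<in> p" and g: "g \<in> carrier G" for x g
  proof -
    have xc: "x \<in> carrier R" and px: "pi x \<in> P" using x unfolding p_def by auto
    have "gcomp G Rb (Abar R M A) (pi x) g \<in> P" using RB.gideal_comp[OF Pg px g] .
    then have "pi (gcomp G R A x g) \<in> P" using gcomp_Rb[OF xc g] by simp
    then show ?thesis unfolding p_def using D.gcomp_carrier[OF xc g] by simp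
  qed
  have proper: "p \<noteq> carrier R"
  proof
    assume "p = carrier R"
    then have "pi \<one> \<in> P" unfolding p_def by blast
    then show False using RB.spec_one[OF P] pi_one by simp
  qed
  have prime: "a \<in> p \<or> b \<in> p" if a: "a \<in> homog G A" and b: "b \<in> homog G A" and ab: "a \<otimes> b \<in> p" for a b
  proof -
    have ac: "a \<in> carrier R" and bc: "b \<in> carrier R" using a b homog_carrier by auto
    have "pi a \<in> homog G (Abar R M A)" "pi b \<in> homog G (Abar R M A)" using a b homog_Rb by auto
    moreover have "pi a \<otimes>\<^bsub>Rb\<^esub> pi b \<in> P" using ab pi_mult[OF ac bc] unfolding p_def by simp
    ultimately have "pi a \<in> P \<or> pi b \<in> P" using RB.spec_prime[OF P] by blast
    then show ?thesis unfolding p_def using ac bc by blast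
  qed
  have "p \<in> Spec_g G R A"
    unfolding Spec_g_def graded_prime_ideal_def graded_ideal_def using pid graded proper prime by blast
  then show ?thesis using Np img by blast
qed

lemma surj_from_psi:
  assumes psi: "qpSpec_ring G Rb (Abar R M A) \<subseteq> psi_q R M ` qpSpec G R A M B"
  shows "\<forall>p\<in>Spec_g G R A. ann R M \<subseteq> p \<longrightarrow> (\<exists>Q\<in>qpSpec G R A M B. pQ Q = p)"
proof (intro ballI impI)
  fix p assume p: "p \<in> Spec_g G R A" and Np: "ann R M \<subseteq> p"
  have "pi ` p \<in> qpSpec_ring G Rb (Abar R M A)" using RB.spec_qp[OF spec_to_Rb[OF p Np]] .
  then have "pi ` p \<in> psi_q R M ` qpSpec G R A M B" using psi by (rule subsetD[rotated])
  then obtain Q where Q: "Q \<in> qpSpec G R A M B" "psi_q R M Q = pi ` p" by (elim imageE) simp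
  have cQ: "ideal (colon R M Q) R" using colon_ideal[OF gsub_sub[OF qp_gsub[OF Q(1)]]] .
  have NQ: "ann R M \<subseteq> colon R M Q" by (rule ann_sub_colon[OF sub_zero[OF gsub_sub[OF qp_gsub[OF Q(1)]]]])
  have "pi ` colon R M Q = pi ` p" using Q(2) unfolding psi_q_def by simp
  then have "colon R M Q = p" using pi_img_inj[OF cQ NQ gideal_ideal[OF spec_gideal[OF p]] Np] by simp
  then have "pQ Q = p" using gr_spec[OF p] by simp
  then show "\<exists>Q\<in>qpSpec G R A M B. pQ Q = p" using Q(1) by blast
qed

lemma phi_eq: "Q \<in> qpSpec G R A M B \<Longrightarrow> phi_map G R A M B Q = pi ` pQ Q"
  unfolding phi_map_def using colon_GrM by simp

lemma pQ_ideal_N: "Q \<in> qpSpec G R A M B \<Longrightarrow> ideal (pQ Q) R \<and> ann R M \<subseteq> pQ Q"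
  using pQ_ideal ann_sub_pQ by blast

lemma inj_iff_U: "inj_on (phi_map G R A M B) (qpSpec G R A M B) \<longleftrightarrow> Ustar"
proof -
  have "phi_map G R A M B P = phi_map G R A M B Q \<longleftrightarrow> pQ P = pQ Q"
    if P: "P \<in> qpSpec G R A M B" and Q: "Q \<in> qpSpec G R A M B" for P Q
  proof
    assume "phi_map G R A M B P = phi_map G R A M B Q"
    then have "pi ` pQ P = pi ` pQ Q" using phi_eq P Q by simp
    then show "pQ P = pQ Q" using pi_img_inj[of "pQ P" "pQ Q"] pQ_ideal_N[OF P] pQ_ideal_N[OF Q] by simp
  qed (simp add: phi_eq P Q)
  then show ?thesis unfolding inj_on_def Ustar_def by meson
qed


abbreviation ZZ where "ZZ \<equiv> zariski_g G Rb (Abar R M A)"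

lemma phi_image:
  assumes surj: "\<forall>p\<in>Spec_g G R A. ann R M \<subseteq> p \<longrightarrow> (\<exists>Q\<in>qpSpec G R A M B. pQ Q = p)"
  shows "phi_map G R A M B ` qpSpec G R A M B = Spec_g G Rb (Abar R M A)"
proof
  show "phi_map G R A M B ` qpSpec G R A M B \<subseteq> Spec_g G Rb (Abar R M A)"
  proof
    fix Pb assume "Pb \<in> phi_map G R A M B ` qpSpec G R A M B"
    then obtain Q where Q: "Q \<in> qpSpec G R A M B" "Pb = phi_map G R A M B Q" by blast
    then show "Pb \<in> Spec_g G Rb (Abar R M A)"
      using spec_to_Rb[OF pQ_spec[OF Q(1)] ann_sub_pQ[OF Q(1)]] phi_eq[OF Q(1)] by simp
  qed
next
  show "Spec_g G Rb (Abar R M A) \<subseteq> phi_map G R A M B ` qpSpec G R A M B"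
  proof
    fix Pb assume Pb: "Pb \<in> Spec_g G Rb (Abar R M A)"
    obtain p where p: "p \<in> Spec_g G R A" "ann R M \<subseteq> p" "pi ` p = Pb" using spec_from_Rb[OF Pb] by blast
    obtain Q where Q: "Q \<in> qpSpec G R A M B" "pQ Q = p" using surj p(1,2) by blast
    have "phi_map G R A M B Q = Pb" using phi_eq[OF Q(1)] Q(2) p(3) by simp
    then show "Pb \<in> phi_map G R A M B ` qpSpec G R A M B" using Q(1) by blast
  qed
qed

lemma homeo_U:
  assumes surj: "\<forall>p\<in>Spec_g G R A. ann R M \<subseteq> p \<longrightarrow> (\<exists>Q\<in>qpSpec G R A M B. pQ Q = p)"
    and U: Ustar
  shows "homeomorphic_map TT ZZ (phi_map G R A M B)"
proof (rule bijective_open_imp_homeomorphic_map)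
  have img: "phi_map G R A M B ` qpSpec G R A M B = Spec_g G Rb (Abar R M A)" by (rule phi_image[OF surj])
  show "phi_map G R A M B ` topspace TT = topspace ZZ" unfolding TT_topspace RB.zar_topspace by (rule img)
  show "inj_on (phi_map G R A M B) (topspace TT)" unfolding TT_topspace using inj_iff_U U by simp
  show "continuous_map TT ZZ (phi_map G R A M B)"
    unfolding continuous_map_def
  proof (intro conjI allI impI)
    show "phi_map G R A M B \<in> topspace TT \<rightarrow> topspace ZZ" unfolding TT_topspace RB.zar_topspace using img by blast
    fix Uz assume "openin ZZ Uz"
    then obtain Ib where Ib: "graded_ideal G Rb (Abar R M A) Ib" "Uz = Spec_g G Rb (Abar R M A) - RB.Vz Ib"
      unfolding RB.zar_openin by (elim exE conjE)
    have Ibc: "Ib \<subseteq> carrier Rb" using RB.ideal_sub[OF RB.gideal_ideal[OF Ib(1)]] .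
    define J where "J = {x \<in> carrier R. pi x \<in> Ib}"
    have Jc: "J \<subseteq> carrier R" unfolding J_def by auto
    have key: "phi_map G R A M B Q \<in> Uz \<longleftrightarrow> \<not> J \<subseteq> pQ Q" if Q: "Q \<in> qpSpec G R A M B" for Q
    proof -
      have inS: "phi_map G R A M B Q \<in> Spec_g G Rb (Abar R M A)" using img Q by blast
      have pid: "ideal (pQ Q) R" and Np: "ann R M \<subseteq> pQ Q" using pQ_ideal_N[OF Q] by auto
      have "Ib \<subseteq> pi ` pQ Q \<longleftrightarrow> J \<subseteq> pQ Q"
      proof
        assume h: "Ib \<subseteq> pi ` pQ Q"
        show "J \<subseteq> pQ Q"
        proof
          fix x assume "x \<in> J"
          then have x: "x \<in> carrier R" "pi x \<in> Ib" unfolding J_def by auto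
          then have "pi x \<in> pi ` pQ Q" using h by blast
          then show "x \<in> pQ Q" using pi_mem[OF pid Np x(1)] by simp
        qed
      next
        assume h: "J \<subseteq> pQ Q"
        show "Ib \<subseteq> pi ` pQ Q"
        proof
          fix y assume y: "y \<in> Ib"
          then obtain x where x: "x \<in> carrier R" "y = pi x" using Ibc carrier_Rb by blast
          then have "x \<in> J" unfolding J_def using y by simp
          then show "y \<in> pi ` pQ Q" using h x(2) by blast
        qed
      qed
      then show ?thesis unfolding Ib(2) using inS phi_eq[OF Q] by simp
    qed
    have "{x \<in> topspace TT. phi_map G R A M B x \<in> Uz} = qpSpec G R A M B - Cl J"
      unfolding TT_topspace Cl_def using key by auto
    then show "openin TT {x \<in> topspace TT. phi_map G R A M B x \<in> Uz}"
      unfolding TT_openin using Jc by blast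
  qed
  show "open_map TT ZZ (phi_map G R A M B)"
    unfolding open_map_def
  proof (intro allI impI)
    fix U assume "openin TT U"
    then obtain J where J: "J \<subseteq> carrier R" "U = qpSpec G R A M B - Cl J" unfolding TT_openin by (elim exE conjE)
    have piJ: "pi ` J \<subseteq> carrier Rb" using J(1) pi_carrier by blast
    have "phi_map G R A M B ` U = Spec_g G Rb (Abar R M A) - RB.Vz (RB.Zcl (pi ` J))"
    proof (rule Set.set_eqI)
      fix Pb
      show "Pb \<in> phi_map G R A M B ` U \<longleftrightarrow> Pb \<in> Spec_g G Rb (Abar R M A) - RB.Vz (RB.Zcl (pi ` J))"
      proof
        assume "Pb \<in> phi_map G R A M B ` U"
        then obtain Q where Q: "Q \<in> qpSpec G R A M B" "\<not> J \<subseteq> pQ Q" "Pb = phi_map G R A M B Q"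
          unfolding J(2) Cl_def by blast
        have PS: "Pb \<in> Spec_g G Rb (Abar R M A)" using img Q(1,3) by blast
        have pid: "ideal (pQ Q) R" and Np: "ann R M \<subseteq> pQ Q" using pQ_ideal_N[OF Q(1)] by auto
        have "\<not> pi ` J \<subseteq> Pb"
        proof
          assume h: "pi ` J \<subseteq> Pb"
          have "J \<subseteq> pQ Q"
          proof
            fix x assume x: "x \<in> J"
            then have "pi x \<in> pi ` pQ Q" using h Q(3) phi_eq[OF Q(1)] by blast
            then show "x \<in> pQ Q" using pi_mem[OF pid Np] x J(1) by blast
          qed
          then show False using Q(2) by simp
        qed
        then show "Pb \<in> Spec_g G Rb (Abar R M A) - RB.Vz (RB.Zcl (pi ` J))"
          using PS RB.Zcl_sub[OF PS piJ] by blast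
      next
        assume "Pb \<in> Spec_g G Rb (Abar R M A) - RB.Vz (RB.Zcl (pi ` J))"
        then have PS: "Pb \<in> Spec_g G Rb (Abar R M A)" and nz: "\<not> RB.Zcl (pi ` J) \<subseteq> Pb" by auto
        have npi: "\<not> pi ` J \<subseteq> Pb" using nz RB.Zcl_sub[OF PS piJ] by simp
        obtain Q where Q: "Q \<in> qpSpec G R A M B" "Pb = phi_map G R A M B Q" using PS img by blast
        have "\<not> J \<subseteq> pQ Q"
        proof
          assume "J \<subseteq> pQ Q"
          then have "pi ` J \<subseteq> pi ` pQ Q" by blast
          then show False using npi Q(2) phi_eq[OF Q(1)] by simp
        qed
        then have "Q \<in> U" unfolding J(2) Cl_def using Q(1) by blast
        then show "Pb \<in> phi_map G R A M B ` U" using Q(2) by blast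
      qed
    qed
    then show "openin ZZ (phi_map G R A M B ` U)"
      unfolding RB.zar_openin using RB.Zcl_gideal by blast
  qed
qed

end

theorem theorem4p15:
  fixes G :: "'g monoid" and R :: "'a ring" and A :: "'g \<Rightarrow> 'a set"
    and M :: "('a, 'b) module" and B :: "'g \<Rightarrow> 'b set"
  assumes grM: "graded_module G R A M B"
    and psi_surj: "qpSpec_ring G (Rbar R M) (Abar R M A) \<subseteq> psi_q R M ` qpSpec G R A M B"
  defines "T \<equiv> quasi_zariski G R A M B"
  shows "(spectral_space T \<longleftrightarrow> t0_space T)
       \<and> (spectral_space T \<longleftrightarrow> inj_on (phi_map G R A M B) (qpSpec G R A M B))
       \<and> (spectral_space T \<longleftrightarrow> (\<forall>P\<in>qpSpec G R A M B. \<forall>Q\<in>qpSpec G R A M B.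
              qpV G R A M B P = qpV G R A M B Q \<longrightarrow> P = Q))
       \<and> (spectral_space T \<longleftrightarrow> (\<forall>p\<in>Spec_g G R A.
              finite (qpSpec_at G R A M B p) \<and> card (qpSpec_at G R A M B p) \<le> 1))
       \<and> (spectral_space T \<longleftrightarrow>
              homeomorphic_map T (zariski_g G (Rbar R M) (Abar R M A)) (phi_map G R A M B))"
proof -
  have gr: "graded_ring G R A" using grM unfolding graded_module_def by blast
  interpret grmod G R A M B
    by (rule grmod.intro[OF grring.intro[OF gr] grmod_axioms.intro[OF grM]])
  have surj: "\<forall>p\<in>Spec_g G R A. ann R M \<subseteq> p \<longrightarrow> (\<exists>Q\<in>qpSpec G R A M B. pQ Q = p)"
    by (rule surj_from_psi[OF psi_surj])
  have sU: "spectral_space T \<longleftrightarrow> Ustar"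
  proof
    assume "spectral_space T"
    then have "t0_space TT" unfolding T_def spectral_space_def by blast
    then show Ustar using t0_iff_U by blast
  next
    assume Ustar
    then have "t0_space TT" using t0_iff_U by blast
    then show "spectral_space T" unfolding T_def by (rule spectral_TT[OF surj])
  qed
  have t0U: "t0_space T \<longleftrightarrow> Ustar" unfolding T_def by (rule t0_iff_U)
  have hU: "homeomorphic_map T (zariski_g G (Rbar R M) (Abar R M A)) (phi_map G R A M B) \<longleftrightarrow> Ustar"
  proof
    assume "homeomorphic_map T (zariski_g G (Rbar R M) (Abar R M A)) (phi_map G R A M B)"
    then have "inj_on (phi_map G R A M B) (topspace TT)" unfolding T_def by (rule homeomorphic_imp_injective_map)
    then show Ustar using inj_iff_U TT_topspace by simp
  next
    assume Ustar
    then show "homeomorphic_map T (zariski_g G (Rbar R M) (Abar R M A)) (phi_map G R A M B)"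
      unfolding T_def by (rule homeo_U[OF surj])
  qed
  show ?thesis using sU t0U hU inj_iff_U cond4_iff_U cond5_iff_U by simp
qed

end
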